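(* Fix a constant $c>0$ and a sequence of finite $d$-regular graphs $(G_d)_{d\in\mathbb{N}}$; let $p=c/d$ and let $G_{d,p}$ be the random spanning subgraph of $G_d$ obtained by retaining each edge independently with probability $p$. Then for every $r\in\mathbb{N}$, for every sufficiently large $d\in\mathbb{N}$ and every vertex $u$ of $G_d$, $$d_{\mathrm{TV}}\big(B^r_{G_{d,p}}[u],\ \mathrm{GW}^r_c\big)\le (\log d)^r d^{-1/2},$$ where the total variation distance is between the laws of these random rooted graphs (up to rooted isomorphism).
   Context: For a graph $H$, a vertex $v$ and $r\ge0$, $B^r_H[v]$ is the subgraph of $H$ induced by the vertices at distance at most $r$ from $v$, rooted at $v$. $\mathrm{GW}_c$ is the Galton–Watson tree rooted at $o$ with offspring distribution $\mathrm{Po}(c)$, and $\mathrm{GW}^r_c$ is its subtree induced by the vertices at distance at most $r$ from $o$, rooted at $o$. For distributions $\mu_1,\mu_2$ on a countable set, $d_{\mathrm{TV}}(\mu_1,\mu_2)=\frac12\sum_\omega|\mu_1(\omega)-\mu_2(\omega)|$. Logarithms are natural. *)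

theory Defs
  imports "HOL-Probability.Probability"
begin

definition simple_graph :: "'a set \<Rightarrow> 'a set set \<Rightarrow> bool" where
  "simple_graph V E \<longleftrightarrow> finite V \<and>
     (\<forall>e\<in>E. \<exists>x y. x \<noteq> y \<and> x \<in> V \<and> y \<in> V \<and> e = {x, y})"

definition regular :: "'a set \<Rightarrow> 'a set set \<Rightarrow> nat \<Rightarrow> bool" where
  "regular V E d \<longleftrightarrow> (\<forall>v\<in>V. card {e\<in>E. v \<in> e} = d)"

type_synonym 'a rgraph = "'a set \<times> 'a set set \<times> 'a"

definition rooted_iso :: "'a rgraph \<Rightarrow> 'b rgraph \<Rightarrow> bool" where
  "rooted_iso G H \<longleftrightarrow> (case G of (V, E, o1) \<Rightarrow> case H of (V', E', o2) \<Rightarrow>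
     \<exists>f. bij_betw f V V' \<and> f o1 = o2 \<and> E' = (\<lambda>e. f ` e) ` E)"

(* rooted isomorphism class, represented as the set of all rooted graphs on nat
   rooted-isomorphic to G (a common countable outcome space for all laws) *)
definition rclass :: "'a rgraph \<Rightarrow> nat rgraph set" where
  "rclass G = {H. rooted_iso G H}"

inductive walk :: "'a set set \<Rightarrow> nat \<Rightarrow> 'a \<Rightarrow> 'a \<Rightarrow> bool" for E where
  walk0: "walk E 0 u u"
| walkS: "walk E k u v \<Longrightarrow> {v, w} \<in> E \<Longrightarrow> walk E (Suc k) u w"

definition ball :: "'a set \<Rightarrow> 'a set set \<Rightarrow> 'a \<Rightarrow> nat \<Rightarrow> 'a rgraph" where
  "ball V E u r = (let B = {v\<in>V. \<exists>k\<le>r. walk E k u v} in (B, {e\<in>E. e \<subseteq> B}, u))"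

definition percolation :: "'a set set \<Rightarrow> real \<Rightarrow> 'a set set pmf" where
  "percolation E p = map_pmf (\<lambda>f. {e\<in>E. f e}) (Pi_pmf E False (\<lambda>_. bernoulli_pmf p))"

(* Galton-Watson tree with Po(c) offspring, truncated at depth r, as a random set of
   Ulam-Harris words (prefix-closed; children of the root are [i], i < N) *)
fun gw_words :: "real \<Rightarrow> nat \<Rightarrow> nat list set pmf" where
  "gw_words c 0 = return_pmf {[]}"
| "gw_words c (Suc r) =
     bind_pmf (poisson_pmf c) (\<lambda>n.
       map_pmf (\<lambda>S. insert [] (\<Union>i<n. (\<lambda>w. i # w) ` S i))
         (Pi_pmf {..<n} {} (\<lambda>_. gw_words c r)))"

definition word_tree :: "nat list set \<Rightarrow> nat list rgraph" where
  "word_tree S = (S, {{butlast w, w} | w. w \<in> S \<and> w \<noteq> []}, [])"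

definition GW_trunc :: "real \<Rightarrow> nat \<Rightarrow> nat list rgraph pmf" where
  "GW_trunc c r = map_pmf word_tree (gw_words c r)"

definition dTV :: "'a pmf \<Rightarrow> 'a pmf \<Rightarrow> real" where
  "dTV \<mu> \<nu> = (1/2) * (\<Sum>\<^sub>\<infinity>\<omega>. \<bar>pmf \<mu> \<omega> - pmf \<nu> \<omega>\<bar>)"

end

theory Submission
  imports Defs
begin


definition nch :: "nat list set \<Rightarrow> nat list \<Rightarrow> nat" where
  "nch W x = card {j. x @ [j] \<in> W}"

definition gwok :: "nat \<Rightarrow> nat list set \<Rightarrow> bool" where
  "gwok r W \<longleftrightarrow> finite W \<and> [] \<in> W \<and> (\<forall>w\<in>W. length w \<le> r) \<and>
     (\<forall>w\<in>W. w \<noteq> [] \<longrightarrow> butlast w \<in> W) \<and>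
     (\<forall>x\<in>W. length x < r \<longrightarrow> {j. x @ [j] \<in> W} = {..<nch W x})"

definition gwglue :: "nat \<Rightarrow> (nat \<Rightarrow> nat list set) \<Rightarrow> nat list set" where
  "gwglue n S = insert [] (\<Union>i<n. (\<lambda>w. i # w) ` S i)"

lemma gw_suc_eq: "gw_words c (Suc r) = bind_pmf (poisson_pmf c) (\<lambda>n.
       map_pmf (gwglue n) (Pi_pmf {..<n} {} (\<lambda>_. gw_words c r)))"
  by (simp add: gwglue_def[abs_def])

lemma gwglue_Cons: "i # x \<in> gwglue n S \<longleftrightarrow> i < n \<and> x \<in> S i"
  by (auto simp: gwglue_def)

lemma gwglue_Nil: "[] \<in> gwglue n S"
  by (auto simp: gwglue_def)

lemma set_gw_Suc: assumes "c > 0" shows "W \<in> set_pmf (gw_words c (Suc r)) \<longleftrightarrow>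
   (\<exists>n S. W = gwglue n S \<and> (\<forall>i<n. S i \<in> set_pmf (gw_words c r)) \<and> (\<forall>i. i \<ge> n \<longrightarrow> S i = {}))"
proof
  assume "W \<in> set_pmf (gw_words c (Suc r))"
  then obtain n S where "W = gwglue n S" "S \<in> PiE_dflt {..<n} {} (\<lambda>_. set_pmf (gw_words c r))"
    by (auto simp: gw_suc_eq set_Pi_pmf o_def simp del: gw_words.simps)
  then show "\<exists>n S. W = gwglue n S \<and> (\<forall>i<n. S i \<in> set_pmf (gw_words c r)) \<and> (\<forall>i. i \<ge> n \<longrightarrow> S i = {})"
    by (intro exI[of _ n] exI[of _ S]) (auto simp: PiE_dflt_def)
next
  assume "\<exists>n S. W = gwglue n S \<and> (\<forall>i<n. S i \<in> set_pmf (gw_words c r)) \<and> (\<forall>i. i \<ge> n \<longrightarrow> S i = {})"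
  then obtain n S where "W = gwglue n S" "S \<in> PiE_dflt {..<n} {} (\<lambda>_. set_pmf (gw_words c r))"
    by (auto simp: PiE_dflt_def)
  then show "W \<in> set_pmf (gw_words c (Suc r))"
    using \<open>c > 0\<close> by (auto simp: gw_suc_eq set_Pi_pmf o_def simp del: gw_words.simps)
qed

lemma gwglue_ok:
  assumes "\<And>i. i < n \<Longrightarrow> gwok r (S i)"
  shows "gwok (Suc r) (gwglue n S)"
proof -
  let ?W = "gwglue n S"
  have fin: "finite ?W" using assms by (auto simp: gwglue_def gwok_def)
  have len: "\<forall>w\<in>?W. length w \<le> Suc r"
  proof
    fix w assume "w \<in> ?W"
    then show "length w \<le> Suc r"
      using assms by (cases w) (auto simp: gwglue_Cons gwok_def)
  qed
  have bl: "\<forall>w\<in>?W. w \<noteq> [] \<longrightarrow> butlast w \<in> ?W"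
  proof (intro ballI impI)
    fix w assume "w \<in> ?W" "w \<noteq> []"
    then obtain i x where w: "w = i # x" "i < n" "x \<in> S i"
      by (cases w) (auto simp: gwglue_Cons)
    show "butlast w \<in> ?W"
    proof (cases "x = []")
      case True then show ?thesis using w by (simp add: gwglue_Nil)
    next
      case False
      then have "butlast x \<in> S i" using assms w by (auto simp: gwok_def)
      then show ?thesis using w False by (simp add: gwglue_Cons)
    qed
  qed
  have ch: "\<forall>x\<in>?W. length x < Suc r \<longrightarrow> {j. x @ [j] \<in> ?W} = {..<nch ?W x}"
  proof (intro ballI impI)
    fix x assume x: "x \<in> ?W" "length x < Suc r"
    have "\<exists>m. {j. x @ [j] \<in> ?W} = {..<m}"
    proof (cases x)
      case Nil
      have "{j. x @ [j] \<in> ?W} = {..<n}"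
        using assms by (auto simp: Nil gwglue_Cons gwok_def)
      then show ?thesis by blast
    next
      case (Cons i y)
      then have iy: "i < n" "y \<in> S i" using x by (auto simp: gwglue_Cons)
      have "{j. x @ [j] \<in> ?W} = {j. y @ [j] \<in> S i}"
        using iy by (auto simp: Cons gwglue_Cons)
      also have "\<dots> = {..<nch (S i) y}" using assms[OF iy(1)] iy x Cons by (auto simp: gwok_def)
      finally show ?thesis by blast
    qed
    then obtain m where m: "{j. x @ [j] \<in> ?W} = {..<m}" by blast
    then have "nch ?W x = m" by (simp add: nch_def)
    then show "{j. x @ [j] \<in> ?W} = {..<nch ?W x}" using m by simp
  qed
  show ?thesis using fin len bl ch by (simp add: gwok_def gwglue_Nil)
qed

lemma gw_ok: assumes "c > 0" shows "W \<in> set_pmf (gw_words c r) \<Longrightarrow> gwok r W"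
proof (induction r arbitrary: W)
  case 0
  then show ?case by (simp add: gwok_def)
next
  case (Suc r)
  then obtain n S where nS: "W = gwglue n S" "\<forall>i<n. S i \<in> set_pmf (gw_words c r)"
    using set_gw_Suc[OF assms] by blast
  then have "\<And>i. i < n \<Longrightarrow> gwok r (S i)" using Suc.IH by blast
  then show ?case unfolding nS(1) by (rule gwglue_ok)
qed


lemma gw_root_children:
  assumes "c > 0" "\<forall>i<m. S i \<in> set_pmf (gw_words c r)"
  shows "{j. [j] \<in> gwglue m S} = {..<m}"
proof -
  have "\<And>i. i < m \<Longrightarrow> [] \<in> S i" using assms gw_ok[OF assms(1)] by (auto simp: gwok_def)
  then show ?thesis by (auto simp: gwglue_Cons[of _ "[]"])
qed

lemma pmf_gw:
  assumes "c > 0"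
  shows "W \<in> set_pmf (gw_words c r) \<Longrightarrow>
    pmf (gw_words c r) W = (\<Prod>x\<in>{x\<in>W. length x < r}. pmf (poisson_pmf c) (nch W x))"
proof (induction r arbitrary: W)
  case 0
  then show ?case by simp
next
  case (Suc r)
  have ex: "\<exists>n S. W = gwglue n S \<and> (\<forall>i<n. S i \<in> set_pmf (gw_words c r)) \<and> (\<forall>i. i \<ge> n \<longrightarrow> S i = {})"
    using Suc.prems set_gw_Suc[OF assms] by simp
  obtain n S where nS0: "W = gwglue n S \<and> (\<forall>i<n. S i \<in> set_pmf (gw_words c r)) \<and> (\<forall>i. i \<ge> n \<longrightarrow> S i = {})"
    using ex by iprover
  have nS: "W = gwglue n S" "\<forall>i<n. S i \<in> set_pmf (gw_words c r)" "\<forall>i. i \<ge> n \<longrightarrow> S i = {}"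
    using nS0 by simp_all
  define P where "P = (\<lambda>m::nat. Pi_pmf {..<m} {} (\<lambda>_. gw_words c r))"
  have zero: "pmf (map_pmf (gwglue m) (P m)) W = 0" if "m \<noteq> n" for m
  proof (rule pmf_map_outside)
    show "W \<notin> gwglue m ` set_pmf (P m)"
    proof
      assume "W \<in> gwglue m ` set_pmf (P m)"
      then obtain S' where S': "W = gwglue m S'" "S' \<in> set_pmf (P m)" by blast
      then have "\<forall>i<m. S' i \<in> set_pmf (gw_words c r)"
        by (auto simp: P_def set_Pi_pmf PiE_dflt_def)
      then have "{j. [j] \<in> W} = {..<m}" using S'(1) gw_root_children[OF assms] by simp
      moreover have "{j. [j] \<in> W} = {..<n}" using nS gw_root_children[OF assms] by simp
      ultimately have "({..<m}::nat set) = {..<n}" by simp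
      then show False using that by simp
    qed
  qed
  have "pmf (gw_words c (Suc r)) W = measure_pmf.expectation (poisson_pmf c) (\<lambda>m. pmf (map_pmf (gwglue m) (P m)) W)"
    by (simp add: gw_suc_eq pmf_bind P_def del: gw_words.simps)
  also have "\<dots> = (\<Sum>m\<in>{n}. pmf (map_pmf (gwglue m) (P m)) W * pmf (poisson_pmf c) m)"
    by (rule integral_measure_pmf_real) (use zero in auto)
  also have "\<dots> = pmf (poisson_pmf c) n * pmf (map_pmf (gwglue n) (P n)) W" by simp
  also have "pmf (map_pmf (gwglue n) (P n)) W = pmf (P n) S"
  proof -
    have "gwglue n -` {W} \<inter> set_pmf (P n) = {S}"
    proof
      show "gwglue n -` {W} \<inter> set_pmf (P n) \<subseteq> {S}"
      proof
        fix S' assume "S' \<in> gwglue n -` {W} \<inter> set_pmf (P n)"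
        then have S': "gwglue n S' = W" "\<forall>i. i \<ge> n \<longrightarrow> S' i = {}"
          by (auto simp: P_def set_Pi_pmf PiE_dflt_def)
        have "S' i = S i" for i
        proof (cases "i < n")
          case True
          have "S' i = {x. i # x \<in> gwglue n S'}" using True by (auto simp: gwglue_Cons)
          also have "\<dots> = {x. i # x \<in> gwglue n S}" using S'(1) nS(1) by simp
          also have "\<dots> = S i" using True by (auto simp: gwglue_Cons)
          finally show ?thesis .
        next
          case False then show ?thesis using S'(2) nS(3) by auto
        qed
        then show "S' \<in> {S}" by auto
      qed
    next
      show "{S} \<subseteq> gwglue n -` {W} \<inter> set_pmf (P n)"
        using nS by (auto simp: P_def set_Pi_pmf PiE_dflt_def)
    qed
    then have "measure_pmf.prob (P n) (gwglue n -` {W}) = measure_pmf.prob (P n) {S}"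
      by (metis measure_Int_set_pmf)
    then show ?thesis by (simp add: pmf_map measure_pmf_single)
  qed
  also have "pmf (P n) S = (\<Prod>i<n. pmf (gw_words c r) (S i))"
    using nS(3) by (simp add: P_def pmf_Pi)
  also have "\<dots> = (\<Prod>i<n. \<Prod>x\<in>{x\<in>S i. length x < r}. pmf (poisson_pmf c) (nch (S i) x))"
    using Suc.IH nS(2) by simp
  finally have eq1: "pmf (gw_words c (Suc r)) W = pmf (poisson_pmf c) n *
     (\<Prod>i<n. \<Prod>x\<in>{x\<in>S i. length x < r}. pmf (poisson_pmf c) (nch (S i) x))" .
  have okS: "\<And>i. i < n \<Longrightarrow> gwok r (S i)" using nS(2) gw_ok[OF assms] by blast
  have setW: "{x\<in>W. length x < Suc r} = insert [] (\<Union>i<n. (\<lambda>x. i # x) ` {x\<in>S i. length x < r})"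
  proof (rule set_eqI)
    fix x show "x \<in> {x\<in>W. length x < Suc r} \<longleftrightarrow> x \<in> insert [] (\<Union>i<n. (\<lambda>x. i # x) ` {x\<in>S i. length x < r})"
      by (cases x) (auto simp: nS(1) gwglue_Cons gwglue_Nil)
  qed
  have nchW0: "nch W [] = n"
    using gw_root_children[OF assms nS(2)] nS(1) by (simp add: nch_def)
  have nchWi: "nch W (i # x) = nch (S i) x" if "i < n" for i x
  proof -
    have "{j. (i # x) @ [j] \<in> W} = {j. x @ [j] \<in> S i}"
      using that by (auto simp: nS(1) gwglue_Cons)
    then show ?thesis by (simp add: nch_def)
  qed
  have finS: "\<And>i. i < n \<Longrightarrow> finite {x\<in>S i. length x < r}" using okS by (auto simp: gwok_def)
  have "(\<Prod>x\<in>{x\<in>W. length x < Suc r}. pmf (poisson_pmf c) (nch W x)) =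
      pmf (poisson_pmf c) (nch W []) * (\<Prod>x\<in>(\<Union>i<n. (\<lambda>x. i # x) ` {x\<in>S i. length x < r}). pmf (poisson_pmf c) (nch W x))"
    unfolding setW by (rule prod.insert) (use finS in auto)
  also have "(\<Prod>x\<in>(\<Union>i<n. (\<lambda>x. i # x) ` {x\<in>S i. length x < r}). pmf (poisson_pmf c) (nch W x)) =
     (\<Prod>i<n. \<Prod>x\<in>(\<lambda>x. i # x) ` {x\<in>S i. length x < r}. pmf (poisson_pmf c) (nch W x))"
    by (rule prod.UNION_disjoint) (use finS in auto)
  also have "\<dots> = (\<Prod>i<n. \<Prod>x\<in>{x\<in>S i. length x < r}. pmf (poisson_pmf c) (nch (S i) x))"
  proof (rule prod.cong[OF refl])
    fix i assume i: "i \<in> {..<n}"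
    show "(\<Prod>x\<in>(\<lambda>x. i # x) ` {x\<in>S i. length x < r}. pmf (poisson_pmf c) (nch W x)) =
          (\<Prod>x\<in>{x\<in>S i. length x < r}. pmf (poisson_pmf c) (nch (S i) x))"
      by (subst prod.reindex) (use i nchWi in \<open>auto simp: inj_on_def\<close>)
  qed
  finally show ?case using eq1 nchW0 by simp
qed


lemma card_insert_le1: "card (insert x A) \<le> card A + 1"
  by (cases "finite A") (auto simp: card_insert_if)

lemma card_gwglue: "card (gwglue n S) \<le> 1 + (\<Sum>i<n. card (S i))"
proof -
  have "card (\<Union>i<n. (\<lambda>w. i # w) ` S i) \<le> (\<Sum>i<n. card ((\<lambda>w. i # w) ` S i))"
    by (rule card_UN_le) simp
  also have "\<dots> = (\<Sum>i<n. card (S i))"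
    by (intro sum.cong refl card_image) (auto simp: inj_on_def)
  finally show ?thesis unfolding gwglue_def using card_insert_le1
    by (metis (no_types, lifting) add.commute add_le_mono1 order_trans)
qed

lemma gw_moment:
  assumes "c > 0"
  shows "(\<integral>\<^sup>+W. ennreal (4 ^ card W) \<partial>measure_pmf (gw_words c r)) \<noteq> \<top>"
proof (induction r)
  case 0
  then show ?case by simp
next
  case (Suc r)
  define B where "B = (\<integral>\<^sup>+W. ennreal (4 ^ card W) \<partial>measure_pmf (gw_words c r))"
  obtain b where b: "B = ennreal b" "b \<ge> 0" using Suc.IH unfolding B_def
    by (cases "(\<integral>\<^sup>+W. ennreal (4 ^ card W) \<partial>measure_pmf (gw_words c r))") auto
  have step: "(\<integral>\<^sup>+S. ennreal (4 ^ card (gwglue n S)) \<partial>measure_pmf (Pi_pmf {..<n} {} (\<lambda>_. gw_words c r)))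
        \<le> ennreal (4 * b ^ n)" for n
  proof -
    have "(\<integral>\<^sup>+S. ennreal (4 ^ card (gwglue n S)) \<partial>measure_pmf (Pi_pmf {..<n} {} (\<lambda>_. gw_words c r)))
        \<le> (\<integral>\<^sup>+S. 4 * (\<Prod>i<n. ennreal (4 ^ card (S i))) \<partial>measure_pmf (Pi_pmf {..<n} {} (\<lambda>_. gw_words c r)))"
    proof (rule nn_integral_mono)
      fix S :: "nat \<Rightarrow> nat list set"
      have "(4::real) ^ card (gwglue n S) \<le> 4 ^ (1 + (\<Sum>i<n. card (S i)))"
        by (rule power_increasing[OF card_gwglue]) simp
      also have "\<dots> = 4 * (\<Prod>i<n. 4 ^ card (S i))" by (simp add: power_sum)
      finally have "ennreal (4 ^ card (gwglue n S)) \<le> ennreal (4 * (\<Prod>i<n. 4 ^ card (S i)))"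
        by (rule ennreal_leI)
      also have "\<dots> = 4 * (\<Prod>i<n. ennreal (4 ^ card (S i)))"
        using ennreal_mult[of 4 "\<Prod>i<n. (4::real) ^ card (S i)"] by (simp add: prod_ennreal prod_nonneg)
      finally show "ennreal (4 ^ card (gwglue n S)) \<le> 4 * (\<Prod>i<n. ennreal (4 ^ card (S i)))" .
    qed
    also have "\<dots> = 4 * (\<integral>\<^sup>+S. (\<Prod>i<n. ennreal (4 ^ card (S i))) \<partial>measure_pmf (Pi_pmf {..<n} {} (\<lambda>_. gw_words c r)))"
      by (rule nn_integral_cmult) simp
    also have "(\<integral>\<^sup>+S. (\<Prod>i<n. ennreal (4 ^ card (S i))) \<partial>measure_pmf (Pi_pmf {..<n} {} (\<lambda>_. gw_words c r)))
        = (\<Prod>i<n. B)"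
      unfolding B_def by (rule nn_integral_prod_Pi_pmf) simp
    also have "4 * (\<Prod>i<n. B) = ennreal (4 * b ^ n)"
      using b by (simp add: ennreal_mult ennreal_power)
    finally show ?thesis .
  qed
  have "(\<integral>\<^sup>+W. ennreal (4 ^ card W) \<partial>measure_pmf (gw_words c (Suc r)))
      = (\<integral>\<^sup>+n. (\<integral>\<^sup>+S. ennreal (4 ^ card (gwglue n S)) \<partial>measure_pmf (Pi_pmf {..<n} {} (\<lambda>_. gw_words c r))) \<partial>measure_pmf (poisson_pmf c))"
    by (simp add: gw_suc_eq nn_integral_bind_pmf nn_integral_map_pmf del: gw_words.simps)
  also have "\<dots> \<le> (\<integral>\<^sup>+n. ennreal (4 * b ^ n) \<partial>measure_pmf (poisson_pmf c))"
    by (rule nn_integral_mono) (rule step)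
  also have "\<dots> = (\<Sum>n. ennreal (pmf (poisson_pmf c) n * (4 * b ^ n)))"
    by (simp add: nn_integral_measure_pmf nn_integral_count_space_nat ennreal_mult' b(2))
  also have "\<dots> < \<top>"
  proof -
    have eq: "(\<lambda>n. pmf (poisson_pmf c) n * (4 * b ^ n)) = (\<lambda>n. (4 * exp (- c)) * (inverse (fact n) * (c * b) ^ n))"
      using assms by (intro ext) (simp add: pmf_poisson power_mult_distrib field_simps)
    have "summable (\<lambda>n. pmf (poisson_pmf c) n * (4 * b ^ n))"
      unfolding eq by (intro summable_mult summable_exp)
    then show ?thesis using b by (simp add: ennreal_suminf_neq_top top.not_eq_extremum)
  qed
  finally show ?case by simp
qed


definition tedges :: "(nat list \<Rightarrow> nat) \<Rightarrow> nat list set \<Rightarrow> nat set set" where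
  "tedges \<phi> W = {{\<phi> (butlast w), \<phi> w} | w. w \<in> W \<and> w \<noteq> []}"

definition Dset :: "nat set set \<Rightarrow> (nat list \<Rightarrow> nat) \<Rightarrow> nat list set \<Rightarrow> nat \<Rightarrow> nat set set" where
  "Dset E \<phi> W r = {e\<in>E. (\<exists>x\<in>W. length x < r \<and> \<phi> x \<in> e) \<or> e \<subseteq> \<phi> ` W}"

definition isemb :: "nat set \<Rightarrow> nat set set \<Rightarrow> nat \<Rightarrow> nat list set \<Rightarrow> (nat list \<Rightarrow> nat) \<Rightarrow> bool" where
  "isemb V E u W \<phi> \<longleftrightarrow> \<phi> \<in> W \<rightarrow>\<^sub>E V \<and> inj_on \<phi> W \<and> \<phi> [] = u \<and>
     (\<forall>w\<in>W. w \<noteq> [] \<longrightarrow> {\<phi> (butlast w), \<phi> w} \<in> E) \<and>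
     (\<forall>w1\<in>W. \<forall>w2\<in>W. w1 \<noteq> [] \<and> w2 \<noteq> [] \<and> butlast w1 = butlast w2 \<and> last w1 < last w2 \<longrightarrow> \<phi> w1 < \<phi> w2)"

lemma rclass_eq:
  assumes "bij_betw f A B" "\<forall>e\<in>EA. e \<subseteq> A" "EB = (\<lambda>e. f ` e) ` EA" "f a = b" "a \<in> A"
  shows "rclass (A, EA, a) = rclass (B, EB, b)"
proof (rule set_eqI)
  fix H :: "nat rgraph"
  obtain V' E' o' where H: "H = (V', E', o')" by (cases H) auto
  show "H \<in> rclass (A, EA, a) \<longleftrightarrow> H \<in> rclass (B, EB, b)"
  proof
    assume "H \<in> rclass (A, EA, a)"
    then obtain g where g: "bij_betw g A V'" "g a = o'" "E' = (\<lambda>e. g ` e) ` EA"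
      by (auto simp: rclass_def rooted_iso_def H)
    define h where "h = g \<circ> the_inv_into A f"
    have inv: "the_inv_into A f (f x) = x" if "x \<in> A" for x
      using assms(1) that by (simp add: bij_betw_def the_inv_into_f_f)
    have "bij_betw (the_inv_into A f) B A" using assms(1) by (rule bij_betw_the_inv_into)
    then have "bij_betw h B V'" unfolding h_def using g(1) by (rule bij_betw_trans)
    moreover have "h b = o'" using assms(4,5) g(2) inv[of a] unfolding h_def by simp
    moreover have "E' = (\<lambda>e. h ` e) ` EB"
    proof -
      have "(\<lambda>e. h ` e) ` EB = (\<lambda>e. h ` f ` e) ` EA" using assms(3) by (simp add: image_image)
      also have "\<dots> = (\<lambda>e. g ` e) ` EA"
      proof (rule image_cong[OF refl])
        fix e assume "e \<in> EA"
        then have "e \<subseteq> A" using assms(2) by blast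
        then show "h ` f ` e = g ` e" unfolding h_def using inv by (force simp: image_image)
      qed
      finally show ?thesis using g(3) by simp
    qed
    ultimately show "H \<in> rclass (B, EB, b)"
      by (auto simp: rclass_def rooted_iso_def H)
  next
    assume "H \<in> rclass (B, EB, b)"
    then obtain g where g: "bij_betw g B V'" "g b = o'" "E' = (\<lambda>e. g ` e) ` EB"
      by (auto simp: rclass_def rooted_iso_def H)
    have "bij_betw (g \<circ> f) A V'" using assms(1) g(1) by (rule bij_betw_trans)
    moreover have "(g \<circ> f) a = o'" using assms(4) g(2) by simp
    moreover have "E' = (\<lambda>e. (g \<circ> f) ` e) ` EA"
      using g(3) assms(3) by (simp add: image_image image_comp)
    ultimately show "H \<in> rclass (A, EA, a)"
      by (auto simp: rclass_def rooted_iso_def H)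
  qed
qed

lemma sg_edge: "simple_graph V E \<Longrightarrow> {a, b} \<in> E \<Longrightarrow> a \<in> V \<and> b \<in> V \<and> a \<noteq> b"
proof -
  assume "simple_graph V E" "{a, b} \<in> E"
  then obtain x y where xy: "x \<noteq> y" "x \<in> V" "y \<in> V" and eq: "{a, b} = {x, y}" unfolding simple_graph_def by blast
  have m: "a \<in> {x, y}" "b \<in> {x, y}" "x \<in> {a, b}" "y \<in> {a, b}" using eq by blast+
  have "a \<in> V" "b \<in> V" using m(1,2) xy by auto
  moreover have "a \<noteq> b" using m(3,4) xy by auto
  ultimately show ?thesis by simp
qed

lemma sg_edge_sub: "simple_graph V E \<Longrightarrow> e \<in> E \<Longrightarrow> e \<subseteq> V"
  unfolding simple_graph_def by auto

context
  fixes V :: "nat set" and E :: "nat set set" and u :: nat and r :: nat and W :: "nat list set"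
    and \<phi> :: "nat list \<Rightarrow> nat" and F :: "nat set set"
  assumes sg: "simple_graph V E" and uV: "u \<in> V" and ok: "gwok r W" and emb: "isemb V E u W \<phi>"
    and FE: "F \<subseteq> E" and FD: "F \<inter> Dset E \<phi> W r = tedges \<phi> W"
begin

lemma T_sub_F: "tedges \<phi> W \<subseteq> F"
  using FD by blast

lemma walk_to: "w \<in> W \<Longrightarrow> walk F (length w) u (\<phi> w)"
proof (induction w rule: rev_induct)
  case Nil
  then show ?case using emb by (simp add: isemb_def walk0)
next
  case (snoc i x)
  have "x \<in> W" using snoc.prems ok unfolding gwok_def by (metis butlast_snoc snoc_eq_iff_butlast)
  then have "walk F (length x) u (\<phi> x)" by (rule snoc.IH)
  moreover have "{\<phi> x, \<phi> (x @ [i])} \<in> F"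
  proof -
    have "{\<phi> (butlast (x @ [i])), \<phi> (x @ [i])} \<in> tedges \<phi> W"
      unfolding tedges_def using snoc.prems by blast
    then show ?thesis using T_sub_F by auto
  qed
  ultimately show ?case by (simp add: walkS)
qed

lemma walk_from': "walk F k u' v \<Longrightarrow> u' = u \<Longrightarrow> k \<le> r \<Longrightarrow> \<exists>w\<in>W. length w \<le> k \<and> \<phi> w = v"
proof (induction rule: walk.induct)
  case (walk0 u')
  have "[] \<in> W" "\<phi> [] = u" using ok emb by (auto simp: gwok_def isemb_def)
  then show ?case using walk0 by (intro bexI[of _ "[]"]) auto
next
  case (walkS k u' v y)
  then obtain w where w: "w \<in> W" "length w \<le> k" "\<phi> w = v" by auto
  have e1: "{v, y} \<in> E" using walkS.hyps(2) FE by blast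
  have e2: "length w < r" using w walkS.prems by simp
  have ex: "\<exists>x\<in>W. length x < r \<and> \<phi> x \<in> {v, y}" using w e2 by auto
  have "{v, y} \<in> Dset E \<phi> W r"
    unfolding Dset_def by (rule CollectI, rule conjI[OF e1], rule disjI1[OF ex])
  then have "{v, y} \<in> tedges \<phi> W" using walkS.hyps(2) FD by blast
  then obtain z where z: "z \<in> W" "z \<noteq> []" "{\<phi> (butlast z), \<phi> z} = {v, y}"
    unfolding tedges_def by blast
  have bz: "butlast z \<in> W" using ok z unfolding gwok_def by blast
  have inj: "inj_on \<phi> W" using emb by (simp add: isemb_def)
  from z(3) consider "\<phi> (butlast z) = v" "\<phi> z = y" | "\<phi> (butlast z) = y" "\<phi> z = v"
    by (auto simp: doubleton_eq_iff)
  then show ?case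
  proof cases
    case 1
    then have "butlast z = w" using inj_onD[OF inj _ bz w(1)] w(3) by simp
    then have "length z = Suc (length w)" using z(2) by (cases z rule: rev_cases) auto
    then show ?thesis using z 1 w by (intro bexI[of _ z]) auto
  next
    case 2
    then have "z = w" using inj_onD[OF inj _ z(1) w(1)] w(3) by simp
    then show ?thesis using bz 2 w by (intro bexI[of _ "butlast z"]) auto
  qed
qed

lemma walk_from: "walk F k u v \<Longrightarrow> k \<le> r \<Longrightarrow> \<exists>w\<in>W. length w \<le> k \<and> \<phi> w = v"
  using walk_from' by blast

lemma phiV: "w \<in> W \<Longrightarrow> \<phi> w \<in> V"
  using emb by (auto simp: isemb_def)

lemma ball_eq: "ball V F u r = (\<phi> ` W, tedges \<phi> W, u)"
proof -
  have B: "{v\<in>V. \<exists>k\<le>r. walk F k u v} = \<phi> ` W"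
  proof
    show "{v\<in>V. \<exists>k\<le>r. walk F k u v} \<subseteq> \<phi> ` W"
      using walk_from by blast
    show "\<phi> ` W \<subseteq> {v\<in>V. \<exists>k\<le>r. walk F k u v}"
    proof
      fix v assume "v \<in> \<phi> ` W"
      then obtain w where w: "w \<in> W" "v = \<phi> w" by blast
      have "length w \<le> r" using ok w(1) by (simp add: gwok_def)
      then show "v \<in> {v\<in>V. \<exists>k\<le>r. walk F k u v}" using walk_to[OF w(1)] phiV[OF w(1)] w(2) by blast
    qed
  qed
  have Ed: "{e\<in>F. e \<subseteq> \<phi> ` W} = tedges \<phi> W"
  proof
    show "{e\<in>F. e \<subseteq> \<phi> ` W} \<subseteq> tedges \<phi> W"
    proof
      fix e assume e: "e \<in> {e\<in>F. e \<subseteq> \<phi> ` W}"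
      then have "e \<in> Dset E \<phi> W r" using FE unfolding Dset_def by auto
      then show "e \<in> tedges \<phi> W" using e FD by blast
    qed
    show "tedges \<phi> W \<subseteq> {e\<in>F. e \<subseteq> \<phi> ` W}"
    proof
      fix e assume e: "e \<in> tedges \<phi> W"
      then obtain w where w: "w \<in> W" "w \<noteq> []" "e = {\<phi> (butlast w), \<phi> w}" unfolding tedges_def by blast
      have "butlast w \<in> W" using ok w by (simp add: gwok_def)
      then have "e \<subseteq> \<phi> ` W" using w by simp
      then show "e \<in> {e\<in>F. e \<subseteq> \<phi> ` W}" using e T_sub_F by blast
    qed
  qed
  show ?thesis unfolding ball_def Let_def B Ed by simp
qed

lemma rclass_ball: "rclass (ball V F u r) = rclass (word_tree W)"
proof -
  have "rclass (word_tree W) = rclass (\<phi> ` W, tedges \<phi> W, u)"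
    unfolding word_tree_def
  proof (rule rclass_eq)
    show "bij_betw \<phi> W (\<phi> ` W)" using emb by (simp add: isemb_def bij_betw_def)
    show "\<forall>e\<in>{{butlast w, w} |w. w \<in> W \<and> w \<noteq> []}. e \<subseteq> W"
      using ok unfolding gwok_def by auto
    show "tedges \<phi> W = (\<lambda>e. \<phi> ` e) ` {{butlast w, w} |w. w \<in> W \<and> w \<noteq> []}"
    proof (rule set_eqI)
      fix x
      show "x \<in> tedges \<phi> W \<longleftrightarrow> x \<in> (\<lambda>e. \<phi> ` e) ` {{butlast w, w} |w. w \<in> W \<and> w \<noteq> []}"
      proof
        assume "x \<in> tedges \<phi> W"
        then obtain w where w: "w \<in> W" "w \<noteq> []" "x = {\<phi> (butlast w), \<phi> w}" unfolding tedges_def by blast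
        then have "x = \<phi> ` {butlast w, w}" by simp
        moreover have "{butlast w, w} \<in> {{butlast w, w} |w. w \<in> W \<and> w \<noteq> []}" using w by blast
        ultimately show "x \<in> (\<lambda>e. \<phi> ` e) ` {{butlast w, w} |w. w \<in> W \<and> w \<noteq> []}" by blast
      next
        assume "x \<in> (\<lambda>e. \<phi> ` e) ` {{butlast w, w} |w. w \<in> W \<and> w \<noteq> []}"
        then obtain w where w: "w \<in> W" "w \<noteq> []" "x = \<phi> ` {butlast w, w}" by blast
        then show "x \<in> tedges \<phi> W" unfolding tedges_def by auto
      qed
    qed
    show "\<phi> [] = u" using emb by (simp add: isemb_def)
    show "[] \<in> W" using ok by (simp add: gwok_def)
  qed
  then show ?thesis using ball_eq by simp
qed

end


lemma mono_enum:
  fixes f g :: "nat \<Rightarrow> nat"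
  assumes "\<forall>i j. i < j \<and> j < m \<longrightarrow> f i < f j" "\<forall>i j. i < j \<and> j < m' \<longrightarrow> g i < g j"
    and "f ` {..<m} = g ` {..<m'}"
  shows "m = m' \<and> (\<forall>j<m. f j = g j)"
proof -
  have L: "sorted_list_of_set (h ` {..<k}) = map h [0..<k]"
    if h: "\<forall>i j. i < j \<and> j < k \<longrightarrow> h i < h j" for h :: "nat \<Rightarrow> nat" and k
  proof -
    have s: "sorted_wrt (<) (map h [0..<k])"
      unfolding sorted_wrt_iff_nth_less using h by auto
    have "distinct (map h [0..<k])" using s by (simp add: strict_sorted_iff)
    then have "length (map h [0..<k]) = card (h ` {..<k})"
      using distinct_card[of "map h [0..<k]"] by (simp add: lessThan_atLeast0)
    moreover have "set (map h [0..<k]) = h ` {..<k}" by (auto simp: lessThan_atLeast0)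
    ultimately show ?thesis using s by (subst sorted_list_of_set_unique[symmetric]) auto
  qed
  have mm: "map f [0..<m] = map g [0..<m']" using L[OF assms(1)] L[OF assms(2)] assms(3) by simp
  then have "length (map f [0..<m]) = length (map g [0..<m'])" by (rule arg_cong)
  then have "m = m'" by simp
  moreover have "\<forall>j<m. f j = g j"
  proof (intro allI impI)
    fix j assume "j < m"
    have "map f [0..<m] ! j = map g [0..<m'] ! j" using mm by simp
    then show "f j = g j" using \<open>j < m\<close> \<open>m = m'\<close> by simp
  qed
  ultimately show ?thesis by simp
qed

lemma gw_children: "gwok r W \<Longrightarrow> x \<in> W \<Longrightarrow> {j. x @ [j] \<in> W} = {..<nch W x}"
proof -
  assume ok: "gwok r W" and x: "x \<in> W"
  show ?thesis
  proof (cases "length x < r")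
    case True then show ?thesis using ok x by (simp add: gwok_def)
  next
    case False
    have "{j. x @ [j] \<in> W} = {}"
    proof -
      have "x @ [j] \<notin> W" for j
      proof
        assume "x @ [j] \<in> W"
        moreover have "\<forall>w\<in>W. length w \<le> r" using ok by (simp add: gwok_def)
        ultimately have "length (x @ [j]) \<le> r" by blast
        then show False using False by simp
      qed
      then show ?thesis by simp
    qed
    then show ?thesis by (simp add: nch_def)
  qed
qed

lemma nbr_tedges:
  assumes ok: "gwok r W" and inj: "inj_on \<phi> W" and x: "x \<in> W"
  shows "{y. {\<phi> x, y} \<in> tedges \<phi> W} =
     (\<lambda>j. \<phi> (x @ [j])) ` {..<nch W x} \<union> (if x = [] then {} else {\<phi> (butlast x)})"
proof (rule set_eqI)
  fix y
  have bW: "\<And>w. w \<in> W \<Longrightarrow> w \<noteq> [] \<Longrightarrow> butlast w \<in> W" using ok by (simp add: gwok_def)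
  have ch: "{j. x @ [j] \<in> W} = {..<nch W x}" by (rule gw_children[OF ok x])
  show "y \<in> {y. {\<phi> x, y} \<in> tedges \<phi> W} \<longleftrightarrow>
     y \<in> (\<lambda>j. \<phi> (x @ [j])) ` {..<nch W x} \<union> (if x = [] then {} else {\<phi> (butlast x)})"
  proof
    assume "y \<in> {y. {\<phi> x, y} \<in> tedges \<phi> W}"
    then obtain z where z: "z \<in> W" "z \<noteq> []" "{\<phi> (butlast z), \<phi> z} = {\<phi> x, y}"
      unfolding tedges_def by blast
    have bz: "butlast z \<in> W" using bW z by blast
    from z(3) consider "\<phi> (butlast z) = \<phi> x" "\<phi> z = y" | "\<phi> (butlast z) = y" "\<phi> z = \<phi> x"
      by (auto simp: doubleton_eq_iff)
    then show "y \<in> (\<lambda>j. \<phi> (x @ [j])) ` {..<nch W x} \<union> (if x = [] then {} else {\<phi> (butlast x)})"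
    proof cases
      case 1
      then have "butlast z = x" using inj_onD[OF inj _ bz x] by simp
      then have "z = x @ [last z]" using z(2) append_butlast_last_id[of z] by simp
      then have "last z \<in> {..<nch W x}" using ch z(1) by (metis mem_Collect_eq)
      then show ?thesis using 1 \<open>z = x @ [last z]\<close> by (metis UnI1 image_eqI)
    next
      case 2
      then have "z = x" using inj_onD[OF inj _ z(1) x] by simp
      then show ?thesis using 2 z(2) by simp
    qed
  next
    assume "y \<in> (\<lambda>j. \<phi> (x @ [j])) ` {..<nch W x} \<union> (if x = [] then {} else {\<phi> (butlast x)})"
    then consider j where "j < nch W x" "y = \<phi> (x @ [j])" | "x \<noteq> []" "y = \<phi> (butlast x)"
      by (auto split: if_splits)
    then show "y \<in> {y. {\<phi> x, y} \<in> tedges \<phi> W}"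
    proof cases
      case 1
      then have "x @ [j] \<in> W" using ch by blast
      then have "{\<phi> (butlast (x @ [j])), \<phi> (x @ [j])} \<in> tedges \<phi> W" unfolding tedges_def by blast
      then show ?thesis using 1 by simp
    next
      case 2
      then have "{\<phi> (butlast x), \<phi> x} \<in> tedges \<phi> W" using x unfolding tedges_def by blast
      then show ?thesis using 2 by (simp add: insert_commute)
    qed
  qed
qed

lemma children_img:
  assumes ok: "gwok r W" and inj: "inj_on \<phi> W" and x: "x \<in> W"
  shows "(\<lambda>j. \<phi> (x @ [j])) ` {..<nch W x} =
     {y. {\<phi> x, y} \<in> tedges \<phi> W} - (if x = [] then {} else {\<phi> (butlast x)})"
proof -
  have ch: "{j. x @ [j] \<in> W} = {..<nch W x}" by (rule gw_children[OF ok x])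
  have "\<phi> (butlast x) \<notin> (\<lambda>j. \<phi> (x @ [j])) ` {..<nch W x}" if "x \<noteq> []"
  proof
    assume "\<phi> (butlast x) \<in> (\<lambda>j. \<phi> (x @ [j])) ` {..<nch W x}"
    then obtain j where j: "j < nch W x" "\<phi> (butlast x) = \<phi> (x @ [j])" by blast
    have "x @ [j] \<in> W" using ch j(1) by blast
    moreover have "butlast x \<in> W" using ok x that by (simp add: gwok_def)
    ultimately have "butlast x = x @ [j]" using inj_onD[OF inj j(2)] by simp
    then have "length (butlast x) = length (x @ [j])" by simp
    then show False by simp
  qed
  then show ?thesis using nbr_tedges[OF assms] by auto
qed

lemma emb_unique:
  assumes okW: "gwok r W" and okW': "gwok r W'"
    and e: "isemb V E u W \<phi>" and e': "isemb V E u W' \<phi>'"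
    and T: "tedges \<phi> W = tedges \<phi>' W'"
  shows "W = W' \<and> \<phi> = \<phi>'"
proof -
  have inj: "inj_on \<phi> W" and inj': "inj_on \<phi>' W'" using e e' by (simp_all add: isemb_def)
  have mono: "\<forall>i j. i < j \<and> j < nch W x \<longrightarrow> \<phi> (x @ [i]) < \<phi> (x @ [j])" if "x \<in> W" for x
  proof (intro allI impI)
    fix i j assume ij: "i < j \<and> j < nch W x"
    have "{i, j} \<subseteq> {..<nch W x}" using ij by auto
    then have "x @ [i] \<in> W" "x @ [j] \<in> W" using gw_children[OF okW that] by auto
    then show "\<phi> (x @ [i]) < \<phi> (x @ [j])" using e ij unfolding isemb_def by auto
  qed
  have mono': "\<forall>i j. i < j \<and> j < nch W' x \<longrightarrow> \<phi>' (x @ [i]) < \<phi>' (x @ [j])" if "x \<in> W'" for x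
  proof (intro allI impI)
    fix i j assume ij: "i < j \<and> j < nch W' x"
    have "{i, j} \<subseteq> {..<nch W' x}" using ij by auto
    then have "x @ [i] \<in> W'" "x @ [j] \<in> W'" using gw_children[OF okW' that] by auto
    then show "\<phi>' (x @ [i]) < \<phi>' (x @ [j])" using e' ij unfolding isemb_def by auto
  qed
  have main: "\<forall>w. length w \<le> n \<longrightarrow> (w \<in> W \<longleftrightarrow> w \<in> W') \<and> (w \<in> W \<longrightarrow> \<phi> w = \<phi>' w)" for n
  proof (induction n)
    case 0
    have "[] \<in> W" "[] \<in> W'" using okW okW' by (simp_all add: gwok_def)
    moreover have "\<phi> [] = \<phi>' []" using e e' by (simp add: isemb_def)
    ultimately show ?case by simp
  next
    case (Suc n)
    show ?case
    proof (intro allI impI)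
      fix w :: "nat list" assume lw: "length w \<le> Suc n"
      show "(w \<in> W \<longleftrightarrow> w \<in> W') \<and> (w \<in> W \<longrightarrow> \<phi> w = \<phi>' w)"
      proof (cases "length w \<le> n")
        case True then show ?thesis using Suc.IH by blast
      next
        case False
        then obtain x j where w: "w = x @ [j]" and lx: "length x = n" using lw
          by (cases w rule: rev_cases) auto
        have IHx: "(x \<in> W \<longleftrightarrow> x \<in> W') \<and> (x \<in> W \<longrightarrow> \<phi> x = \<phi>' x)" using Suc.IH lx by simp
        show ?thesis
        proof (cases "x \<in> W")
          case False
          then have "x \<notin> W'" using IHx by simp
          have "w \<notin> W" using False okW unfolding gwok_def w by (metis butlast_snoc snoc_eq_iff_butlast)
          moreover have "w \<notin> W'" using \<open>x \<notin> W'\<close> okW' unfolding gwok_def w by (metis butlast_snoc snoc_eq_iff_butlast)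
          ultimately show ?thesis by simp
        next
          case True
          have xW': "x \<in> W'" and px: "\<phi> x = \<phi>' x" using IHx True by auto
          have par: "(if x = [] then {} else {\<phi> (butlast x)}) = (if x = [] then {} else {\<phi>' (butlast x)})"
          proof (cases "x = []")
            case False
            have "butlast x \<in> W" using okW True False by (simp add: gwok_def)
            moreover have "length (butlast x) \<le> n" using lx by simp
            ultimately have "\<phi> (butlast x) = \<phi>' (butlast x)" using Suc.IH by blast
            then show ?thesis by simp
          qed simp
          have img: "(\<lambda>j. \<phi> (x @ [j])) ` {..<nch W x} = (\<lambda>j. \<phi>' (x @ [j])) ` {..<nch W' x}"
            using children_img[OF okW inj True] children_img[OF okW' inj' xW'] T px par by simp
          have eq: "nch W x = nch W' x \<and> (\<forall>j<nch W x. \<phi> (x @ [j]) = \<phi>' (x @ [j]))"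
            by (rule mono_enum[OF mono[OF True] mono'[OF xW'] img])
          have "w \<in> W \<longleftrightarrow> j < nch W x" using gw_children[OF okW True] w by blast
          moreover have "w \<in> W' \<longleftrightarrow> j < nch W' x" using gw_children[OF okW' xW'] w by blast
          ultimately show ?thesis using eq w by auto
        qed
      qed
    qed
  qed
  have mw: "(w \<in> W \<longleftrightarrow> w \<in> W') \<and> (w \<in> W \<longrightarrow> \<phi> w = \<phi>' w)" for w
    using main[of "length w"] by simp
  have WW: "W = W'" using mw by blast
  moreover have "\<phi> = \<phi>'"
  proof
    fix w show "\<phi> w = \<phi>' w"
    proof (cases "w \<in> W")
      case True then show ?thesis using mw by simp
    next
      case False
      have p1: "\<phi> \<in> W \<rightarrow>\<^sub>E V" using e by (simp add: isemb_def)
      have p2: "\<phi>' \<in> W' \<rightarrow>\<^sub>E V" using e' by (simp add: isemb_def)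
      show ?thesis using PiE_arb[OF p1 False] PiE_arb[OF p2] False WW by simp
    qed
  qed
  ultimately show ?thesis by simp
qed


definition Nb :: "nat set set \<Rightarrow> nat \<Rightarrow> nat set" where
  "Nb E v = {y. {v, y} \<in> E}"

lemma card_Nb:
  assumes sg: "simple_graph V E" and reg: "regular V E d" and v: "v \<in> V"
  shows "card (Nb E v) = d"
proof -
  have "bij_betw (\<lambda>y. {v, y}) (Nb E v) {e\<in>E. v \<in> e}"
  proof (rule bij_betwI')
    fix x y assume "x \<in> Nb E v" "y \<in> Nb E v"
    show "({v, x} = {v, y}) = (x = y)"
    proof
      assume eq: "{v, x} = {v, y}"
      have "x \<in> {v, y}" using eq by blast
      moreover have "x \<noteq> v" using \<open>x \<in> Nb E v\<close> sg_edge[OF sg] unfolding Nb_def by blast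
      ultimately show "x = y" by blast
    qed simp
  next
    fix x assume "x \<in> Nb E v" then show "{v, x} \<in> {e\<in>E. v \<in> e}" by (simp add: Nb_def)
  next
    fix e assume e: "e \<in> {e\<in>E. v \<in> e}"
    then obtain a b where ab: "e = {a, b}" "a \<noteq> b" using sg unfolding simple_graph_def by blast
    show "\<exists>x\<in>Nb E v. e = {v, x}"
    proof (cases "a = v")
      case True then show ?thesis using e ab by (intro bexI[of _ b]) (auto simp: Nb_def)
    next
      case False
      then have "b = v" using e ab by blast
      then show ?thesis using e ab by (intro bexI[of _ a]) (auto simp: Nb_def insert_commute)
    qed
  qed
  then have "card (Nb E v) = card {e\<in>E. v \<in> e}" by (rule bij_betw_same_card)
  also have "\<dots> = d" using reg v by (simp add: regular_def)
  finally show ?thesis .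
qed

lemma Nb_sub: "simple_graph V E \<Longrightarrow> Nb E v \<subseteq> V"
proof
  fix y assume "simple_graph V E" "y \<in> Nb E v"
  then show "y \<in> V" using sg_edge[of V E v y] unfolding Nb_def by simp
qed

definition subW :: "nat list set \<Rightarrow> nat list set \<Rightarrow> nat list set" where
  "subW W P = insert [] {w\<in>W. w \<noteq> [] \<and> butlast w \<in> P}"

context
  fixes V :: "nat set" and E :: "nat set set" and u :: nat and r :: nat and W :: "nat list set" and d :: nat
  assumes sg: "simple_graph V E" and reg: "regular V E d" and uV: "u \<in> V" and ok: "gwok r W"
begin

definition Mon :: "nat list set \<Rightarrow> (nat list \<Rightarrow> nat) set" where
  "Mon W' = {\<phi>. isemb V E u W' \<phi>}"

lemma finV: "finite V" using sg by (simp add: simple_graph_def)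
lemma finW: "finite W" using ok by (simp add: gwok_def)
lemma NilW: "[] \<in> W" using ok by (simp add: gwok_def)
lemma blW: "w \<in> W \<Longrightarrow> w \<noteq> [] \<Longrightarrow> butlast w \<in> W" using ok by (simp add: gwok_def)

lemma subW_sub: "subW W P \<subseteq> W" unfolding subW_def using NilW by blast

lemma finite_Mon: "W' \<subseteq> W \<Longrightarrow> finite (Mon W')"
proof -
  assume "W' \<subseteq> W"
  then have "finite W'" using finW finite_subset by blast
  then have "finite (W' \<rightarrow>\<^sub>E V)" using finV by (simp add: finite_PiE)
  moreover have "Mon W' \<subseteq> W' \<rightarrow>\<^sub>E V" unfolding Mon_def isemb_def by blast
  ultimately show ?thesis using finite_subset by blast
qed

definition closedP :: "nat list set \<Rightarrow> bool" where
  "closedP P \<longleftrightarrow> P \<subseteq> {x\<in>W. length x < r} \<and> (\<forall>x\<in>P. x \<noteq> [] \<longrightarrow> butlast x \<in> P)"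

lemma base_count: "card (Mon (subW W {})) \<ge> 1"
proof -
  have s: "subW W {} = {[]}" by (simp add: subW_def)
  define \<phi>0 where "\<phi>0 = (\<lambda>w::nat list. if w = [] then u else undefined)"
  have "\<phi>0 \<in> Mon {[]}" unfolding Mon_def isemb_def \<phi>0_def using uV by (auto simp: PiE_def extensional_def)
  moreover have "finite (Mon {[]})" using finite_Mon[of "{[]}"] NilW by simp
  ultimately have "0 < card (Mon {[]})" using card_gt_0_iff by blast
  then show ?thesis unfolding s by simp
qed

lemma ext_count:
  assumes cP: "closedP P" and xP: "x \<in> P" and maxx: "\<forall>y\<in>P. length y \<le> length x"
  shows "card (Mon (subW W P)) \<ge> card (Mon (subW W (P - {x}))) * ((d - card W) choose nch W x)"
proof -
  define P' where "P' = P - {x}"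
  define A where "A = subW W P'"
  define B where "B = subW W P"
  define n where "n = nch W x"
  define Ch where "Ch = {w\<in>W. w \<noteq> [] \<and> butlast w = x}"
  have PW: "P \<subseteq> W" using cP unfolding closedP_def by blast
  have Pcl: "\<And>y. y \<in> P \<Longrightarrow> y \<noteq> [] \<Longrightarrow> butlast y \<in> P" using cP unfolding closedP_def by blast
  have xW: "x \<in> W" using PW xP by blast
  have chx: "{j. x @ [j] \<in> W} = {..<n}" unfolding n_def by (rule gw_children[OF ok xW])
  have Ch_iff: "w \<in> Ch \<longleftrightarrow> (\<exists>j<n. w = x @ [j])" for w
  proof
    assume "w \<in> Ch"
    then have w: "w \<in> W" "w \<noteq> []" "butlast w = x" unfolding Ch_def by auto
    then have "w = x @ [last w]" using append_butlast_last_id[of w] by simp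
    then have "x @ [last w] \<in> W" using w(1) by simp
    then have "last w \<in> {j. x @ [j] \<in> W}" by simp
    then have "last w < n" using chx by simp
    then show "\<exists>j<n. w = x @ [j]" using \<open>w = x @ [last w]\<close> by blast
  next
    assume "\<exists>j<n. w = x @ [j]"
    then obtain j where "j < n" "w = x @ [j]" by blast
    then show "w \<in> Ch" using chx unfolding Ch_def by auto
  qed
  have B_eq: "B = A \<union> Ch"
    unfolding A_def B_def Ch_def subW_def P'_def using xP by auto
  have AW: "A \<subseteq> W" unfolding A_def by (rule subW_sub)
  have BW: "B \<subseteq> W" unfolding B_def by (rule subW_sub)
  have disj: "w \<in> A \<Longrightarrow> w \<notin> Ch" for w
    unfolding A_def Ch_def subW_def P'_def by auto
  have xA: "x \<in> A"
  proof (cases "x = []")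
    case True then show ?thesis unfolding A_def subW_def by simp
  next
    case False
    then have "butlast x \<in> P" using Pcl xP by blast
    moreover have "butlast x \<noteq> x" using False by (cases x rule: rev_cases) auto
    ultimately show ?thesis unfolding A_def subW_def P'_def using xW False by simp
  qed
  have A_bl: "butlast w \<in> A" if w: "w \<in> A" "w \<noteq> []" for w
  proof -
    have wW: "w \<in> W" and yP': "butlast w \<in> P'" using w unfolding A_def subW_def by auto
    show ?thesis
    proof (cases "butlast w = []")
      case True then show ?thesis unfolding A_def subW_def by simp
    next
      case False
      have yP: "butlast w \<in> P" using yP' unfolding P'_def by simp
      then have "butlast (butlast w) \<in> P" using Pcl False by blast
      moreover have "length (butlast (butlast w)) < length x"
      proof -
        have "length (butlast w) \<le> length x" using maxx yP by blast
        moreover have "length (butlast (butlast w)) < length (butlast w)"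
        proof -
          have "length (butlast w) \<noteq> 0" using False length_0_conv by blast
          moreover have "length (butlast (butlast w)) = length (butlast w) - 1" by (rule length_butlast)
          ultimately show ?thesis by linarith
        qed
        ultimately show ?thesis by linarith
      qed
      then have "butlast (butlast w) \<noteq> x" by auto
      ultimately have "butlast (butlast w) \<in> P'" unfolding P'_def by simp
      moreover have "butlast w \<in> W" using yP PW by blast
      ultimately show ?thesis unfolding A_def subW_def using False by simp
    qed
  qed
  define ext where "ext = (\<lambda>(\<phi>::nat list \<Rightarrow> nat) (C::nat set) (w::nat list).
      if w \<in> Ch then sorted_list_of_set C ! last w else \<phi> w)"
  define Cs where "Cs = (\<lambda>\<phi>::nat list \<Rightarrow> nat. {C. C \<subseteq> Nb E (\<phi> x) - \<phi> ` A \<and> card C = n})"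
  have finNb: "finite (Nb E v)" for v by (rule finite_subset[OF Nb_sub[OF sg] finV])
  have Lfacts: "finite C \<and> length (sorted_list_of_set C) = n \<and> set (sorted_list_of_set C) = C \<and>
      sorted_wrt (<) (sorted_list_of_set C) \<and> distinct (sorted_list_of_set C)"
    if "C \<in> Cs \<phi>" for C \<phi>
  proof -
    have "C \<subseteq> Nb E (\<phi> x)" using that unfolding Cs_def by auto
    then have "finite C" using finNb finite_subset by blast
    moreover have "card C = n" using that unfolding Cs_def by simp
    ultimately show ?thesis by (simp add: strict_sorted_list_of_set)
  qed
  have ext_ch: "ext \<phi> C (x @ [j]) = sorted_list_of_set C ! j" if "j < n" for \<phi> C j
    using that Ch_iff unfolding ext_def by auto
  have ext_nch: "w \<notin> Ch \<Longrightarrow> ext \<phi> C w = \<phi> w" for \<phi> C w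
    unfolding ext_def by simp
  have ext_mem: "ext \<phi> C \<in> Mon B" if \<phi>: "\<phi> \<in> Mon A" and C: "C \<in> Cs \<phi>" for \<phi> C
  proof -
    let ?L = "sorted_list_of_set C"
    have L: "length ?L = n" "set ?L = C" "sorted_wrt (<) ?L" "distinct ?L"
      using Lfacts[OF C] by auto
    have e: "isemb V E u A \<phi>" using \<phi> unfolding Mon_def by simp
    have pie: "\<phi> \<in> A \<rightarrow>\<^sub>E V" and inj: "inj_on \<phi> A" and root: "\<phi> [] = u"
      and edg: "\<forall>w\<in>A. w \<noteq> [] \<longrightarrow> {\<phi> (butlast w), \<phi> w} \<in> E"
      and mon: "\<forall>w1\<in>A. \<forall>w2\<in>A. w1 \<noteq> [] \<and> w2 \<noteq> [] \<and> butlast w1 = butlast w2 \<and> last w1 < last w2 \<longrightarrow> \<phi> w1 < \<phi> w2"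
      using e unfolding isemb_def by auto
    have Csub: "C \<subseteq> Nb E (\<phi> x)" "C \<inter> \<phi> ` A = {}" using C unfolding Cs_def by auto
    have Lin: "?L ! j \<in> C" if "j < n" for j
    proof -
      have "j < length ?L" using L(1) that by (simp only:)
      then have "?L ! j \<in> set ?L" by (rule nth_mem)
      then show ?thesis unfolding L(2) .
    qed
    have chv: "ext \<phi> C w \<in> C" if wC: "w \<in> Ch" for w
    proof -
      obtain j where "j < n" "w = x @ [j]" using Ch_iff[THEN iffD1, OF wC] by blast
      then show ?thesis using ext_ch Lin by simp
    qed
    have p1: "ext \<phi> C \<in> B \<rightarrow>\<^sub>E V"
    proof (rule PiE_I)
      fix w assume "w \<in> B"
      then consider "w \<in> A" | "w \<in> Ch" using B_eq by blast
      then show "ext \<phi> C w \<in> V"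
      proof cases
        case 1 then show ?thesis using ext_nch disj pie by auto
      next
        case 2 then show ?thesis using chv Csub(1) Nb_sub[OF sg] by blast
      qed
    next
      fix w assume "w \<notin> B"
      then have "w \<notin> A" "w \<notin> Ch" using B_eq by auto
      then show "ext \<phi> C w = undefined" using ext_nch PiE_arb[OF pie] by simp
    qed
    have p2: "inj_on (ext \<phi> C) B"
    proof (rule inj_onI)
      fix w1 w2 assume w: "w1 \<in> B" "w2 \<in> B" "ext \<phi> C w1 = ext \<phi> C w2"
      consider "w1 \<in> Ch" "w2 \<in> Ch" | "w1 \<in> Ch" "w2 \<in> A" | "w1 \<in> A" "w2 \<in> Ch" | "w1 \<in> A" "w2 \<in> A"
        using w(1,2) B_eq by blast
      then show "w1 = w2"
      proof cases
        case 1
        obtain j1 where j1: "j1 < n" "w1 = x @ [j1]" using Ch_iff[THEN iffD1, OF 1(1)] by blast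
        obtain j2 where j2: "j2 < n" "w2 = x @ [j2]" using Ch_iff[THEN iffD1, OF 1(2)] by blast
        have j: "j1 < n" "w1 = x @ [j1]" "j2 < n" "w2 = x @ [j2]" using j1 j2 by auto
        then have "?L ! j1 = ?L ! j2" using w(3) ext_ch by simp
        then have "j1 = j2" using nth_eq_iff_index_eq[OF L(4)] j L(1) by simp
        then show ?thesis using j by simp
      next
        case 2
        have "ext \<phi> C w1 \<in> C" using chv 2 by blast
        moreover have "ext \<phi> C w2 \<in> \<phi> ` A" using 2 ext_nch disj by auto
        ultimately show ?thesis using Csub(2) w(3) by auto
      next
        case 3
        have "ext \<phi> C w2 \<in> C" using chv 3 by blast
        moreover have "ext \<phi> C w1 \<in> \<phi> ` A" using 3 ext_nch disj by auto
        ultimately show ?thesis using Csub(2) w(3) by auto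
      next
        case 4
        then have "\<phi> w1 = \<phi> w2" using w(3) ext_nch disj by simp
        then show ?thesis using inj_onD[OF inj _ 4] by simp
      qed
    qed
    have p3: "ext \<phi> C [] = u" using root ext_nch unfolding Ch_def by simp
    have p4: "\<forall>w\<in>B. w \<noteq> [] \<longrightarrow> {ext \<phi> C (butlast w), ext \<phi> C w} \<in> E"
    proof (intro ballI impI)
      fix w assume w: "w \<in> B" "w \<noteq> []"
      then consider "w \<in> A" | "w \<in> Ch" using B_eq by blast
      then show "{ext \<phi> C (butlast w), ext \<phi> C w} \<in> E"
      proof cases
        case 1
        have "butlast w \<in> A" using A_bl 1 w(2) by blast
        then show ?thesis using edg 1 w(2) ext_nch disj by simp
      next
        case 2
        have bw: "butlast w = x" using 2 unfolding Ch_def by simp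
        have "ext \<phi> C (butlast w) = \<phi> x" using bw ext_nch disj xA by simp
        moreover have "ext \<phi> C w \<in> Nb E (\<phi> x)" using chv 2 Csub(1) by blast
        ultimately show ?thesis unfolding Nb_def by simp
      qed
    qed
    have p5: "\<forall>w1\<in>B. \<forall>w2\<in>B. w1 \<noteq> [] \<and> w2 \<noteq> [] \<and> butlast w1 = butlast w2 \<and> last w1 < last w2 \<longrightarrow>
        ext \<phi> C w1 < ext \<phi> C w2"
    proof (intro ballI impI)
      fix w1 w2 assume w: "w1 \<in> B" "w2 \<in> B" and c: "w1 \<noteq> [] \<and> w2 \<noteq> [] \<and> butlast w1 = butlast w2 \<and> last w1 < last w2"
      show "ext \<phi> C w1 < ext \<phi> C w2"
      proof (cases "butlast w1 = x")
        case True
        then have "w1 \<in> Ch" "w2 \<in> Ch" using w c B_eq BW unfolding Ch_def by auto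
        obtain j1 where j1: "j1 < n" "w1 = x @ [j1]" using Ch_iff[THEN iffD1, OF \<open>w1 \<in> Ch\<close>] by blast
        obtain j2 where j2: "j2 < n" "w2 = x @ [j2]" using Ch_iff[THEN iffD1, OF \<open>w2 \<in> Ch\<close>] by blast
        have j: "j1 < n" "w1 = x @ [j1]" "j2 < n" "w2 = x @ [j2]" using j1 j2 by auto
        then have "j1 < j2" using c by simp
        then show ?thesis using j ext_ch sorted_wrt_nth_less[OF L(3)] L(1) by simp
      next
        case False
        then have "w1 \<notin> Ch" "w2 \<notin> Ch" using c unfolding Ch_def by auto
        then have "w1 \<in> A" "w2 \<in> A" using w B_eq by auto
        then show ?thesis using mon c ext_nch \<open>w1 \<notin> Ch\<close> \<open>w2 \<notin> Ch\<close> by simp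
      qed
    qed
    show ?thesis unfolding Mon_def isemb_def using p1 p2 p3 p4 p5 by simp
  qed
  have ext_inj: "inj_on (\<lambda>(\<phi>, C). ext \<phi> C) (Sigma (Mon A) Cs)"
  proof (rule inj_onI)
    fix a b assume a: "a \<in> Sigma (Mon A) Cs" and b: "b \<in> Sigma (Mon A) Cs"
      and eq: "(\<lambda>(\<phi>, C). ext \<phi> C) a = (\<lambda>(\<phi>, C). ext \<phi> C) b"
    obtain \<phi> C where aa: "a = (\<phi>, C)" "\<phi> \<in> Mon A" "C \<in> Cs \<phi>" using a by blast
    obtain \<psi> D where bb: "b = (\<psi>, D)" "\<psi> \<in> Mon A" "D \<in> Cs \<psi>" using b by blast
    have e: "ext \<phi> C = ext \<psi> D" using eq aa bb by simp
    have pie1: "\<phi> \<in> A \<rightarrow>\<^sub>E V" and pie2: "\<psi> \<in> A \<rightarrow>\<^sub>E V" using aa bb unfolding Mon_def isemb_def by auto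
    have "\<phi> = \<psi>"
    proof
      fix w show "\<phi> w = \<psi> w"
      proof (cases "w \<in> Ch")
        case True
        then have "w \<notin> A" using disj by blast
        then show ?thesis using PiE_arb[OF pie1] PiE_arb[OF pie2] by simp
      next
        case False
        have "ext \<phi> C w = ext \<psi> D w" using e by simp
        then show ?thesis using ext_nch[OF False] by simp
      qed
    qed
    moreover have "C = D"
    proof -
      have img: "ext \<phi> C ` Ch = E'" if "E' \<in> Cs \<phi>'" "ext \<phi> C = ext \<phi>' E'" for \<phi>' E'
      proof -
        have L: "length (sorted_list_of_set E') = n" "set (sorted_list_of_set E') = E'"
          using Lfacts[OF that(1)] by auto
        have "ext \<phi> C ` Ch = ext \<phi>' E' ` ((\<lambda>j. x @ [j]) ` {..<n})"
          using that(2) Ch_iff by auto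
        also have "\<dots> = (\<lambda>j. sorted_list_of_set E' ! j) ` {..<n}"
          using ext_ch by (auto simp: image_image)
        also have "\<dots> = set (sorted_list_of_set E')" using L(1) by (auto simp: set_conv_nth)
        finally show ?thesis using L(2) by simp
      qed
      show ?thesis using img[OF aa(3) refl] img[OF bb(3) e] by simp
    qed
    ultimately show "a = b" using aa bb by simp
  qed
  have finA: "finite (Mon A)" using finite_Mon AW by blast
  have finCs: "finite (Cs \<phi>)" for \<phi> unfolding Cs_def using finNb by (auto intro: finite_subset)
  have cardCs: "card (Cs \<phi>) \<ge> (d - card W) choose n" if "\<phi> \<in> Mon A" for \<phi>
  proof -
    have e: "isemb V E u A \<phi>" using that unfolding Mon_def by simp
    have "\<phi> x \<in> V" using e xA unfolding isemb_def by auto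
    then have cN: "card (Nb E (\<phi> x)) = d" by (rule card_Nb[OF sg reg])
    have "card (\<phi> ` A) \<le> card W"
      using card_image_le[of A \<phi>] card_mono[OF finW AW] AW finW finite_subset by fastforce
    moreover have "card (Nb E (\<phi> x)) - card (\<phi> ` A) \<le> card (Nb E (\<phi> x) - \<phi> ` A)"
      by (rule diff_card_le_card_Diff) (use AW finW finite_subset in blast)
    ultimately have "d - card W \<le> card (Nb E (\<phi> x) - \<phi> ` A)" using cN by linarith
    then have "(d - card W) choose n \<le> card (Nb E (\<phi> x) - \<phi> ` A) choose n"
      by (rule binomial_right_mono)
    also have "\<dots> = card (Cs \<phi>)" unfolding Cs_def
      by (rule n_subsets[symmetric]) (use finNb in blast)
    finally show ?thesis .
  qed
  have "card (Mon A) * ((d - card W) choose n) = (\<Sum>\<phi>\<in>Mon A. (d - card W) choose n)" by simp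
  also have "\<dots> \<le> (\<Sum>\<phi>\<in>Mon A. card (Cs \<phi>))" by (rule sum_mono) (use cardCs in blast)
  also have "\<dots> = card (Sigma (Mon A) Cs)" by (rule card_SigmaI[symmetric]) (use finA finCs in auto)
  also have "\<dots> = card ((\<lambda>(\<phi>, C). ext \<phi> C) ` Sigma (Mon A) Cs)" by (rule card_image[OF ext_inj, symmetric])
  also have "\<dots> \<le> card (Mon B)"
  proof (rule card_mono)
    show "finite (Mon B)" using finite_Mon BW by blast
    show "(\<lambda>(\<phi>, C). ext \<phi> C) ` Sigma (Mon A) Cs \<subseteq> Mon B" using ext_mem by auto
  qed
  finally show ?thesis unfolding A_def B_def n_def P'_def .
qed

lemma count_P: "closedP P \<Longrightarrow> card (Mon (subW W P)) \<ge> (\<Prod>x\<in>P. (d - card W) choose nch W x)"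
proof (induction "card P" arbitrary: P rule: less_induct)
  case less
  show ?case
  proof (cases "P = {}")
    case True
    then show ?thesis using base_count by simp
  next
    case False
    have PW: "P \<subseteq> W" using less.prems unfolding closedP_def by blast
    have finP: "finite P" using PW finW finite_subset by blast
    define M where "M = Max (length ` P)"
    have "M \<in> length ` P" unfolding M_def using finP False by (intro Max_in) auto
    then obtain x where xP: "x \<in> P" and lx: "length x = M" by blast
    have maxx: "\<forall>y\<in>P. length y \<le> length x"
      using finP lx unfolding M_def by auto
    have cl: "closedP (P - {x})"
      unfolding closedP_def
    proof (intro conjI ballI impI)
      show "P - {x} \<subseteq> {x\<in>W. length x < r}" using less.prems unfolding closedP_def by blast
    next
      fix y assume y: "y \<in> P - {x}" "y \<noteq> []"
      then have "butlast y \<in> P" using less.prems unfolding closedP_def by blast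
      moreover have "butlast y \<noteq> x"
      proof
        assume "butlast y = x"
        then have "length x < length y" using y(2) by (cases y rule: rev_cases) auto
        moreover have "length y \<le> length x" using maxx y(1) by blast
        ultimately show False by simp
      qed
      ultimately show "butlast y \<in> P - {x}" by simp
    qed
    have "card (P - {x}) < card P" using finP xP by (rule card_Diff1_less)
    then have IH: "card (Mon (subW W (P - {x}))) \<ge> (\<Prod>y\<in>P - {x}. (d - card W) choose nch W y)"
      using less.hyps cl by blast
    have "(\<Prod>y\<in>P. (d - card W) choose nch W y) = ((d - card W) choose nch W x) * (\<Prod>y\<in>P - {x}. (d - card W) choose nch W y)"
      using finP xP by (rule prod.remove)
    also have "\<dots> \<le> ((d - card W) choose nch W x) * card (Mon (subW W (P - {x})))"
      using IH by simp
    also have "\<dots> \<le> card (Mon (subW W P))"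
      using ext_count[OF less.prems xP maxx] by (simp add: mult.commute)
    finally show ?thesis .
  qed
qed

lemma count_Mon: "card (Mon W) \<ge> (\<Prod>x\<in>{x\<in>W. length x < r}. (d - card W) choose nch W x)"
proof -
  let ?I = "{x\<in>W. length x < r}"
  have cl: "closedP ?I"
    unfolding closedP_def
  proof (intro conjI ballI impI)
    fix y assume y: "y \<in> ?I" "y \<noteq> []"
    then have "butlast y \<in> W" using blW by blast
    moreover have "length (butlast y) < r" using y(1) by (simp add: less_imp_diff_less)
    ultimately show "butlast y \<in> ?I" by simp
  qed simp
  have "subW W ?I = W"
  proof
    show "subW W ?I \<subseteq> W" by (rule subW_sub)
    show "W \<subseteq> subW W ?I"
    proof
      fix w assume w: "w \<in> W"
      show "w \<in> subW W ?I"
      proof (cases "w = []")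
        case True then show ?thesis by (simp add: subW_def)
      next
        case False
        have "length w \<le> r" using ok w by (simp add: gwok_def)
        then have "length (butlast w) < r" using False by (cases w rule: rev_cases) auto
        then show ?thesis using blW[OF w False] w False by (simp add: subW_def)
      qed
    qed
  qed
  then show ?thesis using count_P[OF cl] by simp
qed

end


lemma measure_perc_event:
  fixes E T D :: "nat set set"
  assumes finE: "finite E" and TD: "T \<subseteq> D" and DE: "D \<subseteq> E" and p: "0 \<le> p" "p \<le> 1"
  shows "measure_pmf.prob (percolation E p) {F. F \<inter> D = T} = p ^ card T * (1 - p) ^ card (D - T)"
proof -
  define B where "B = (\<lambda>e. if e \<in> D then {e \<in> T} else (UNIV :: bool set))"
  have pre: "(\<lambda>f. {e\<in>E. f e}) -` {F. F \<inter> D = T} = Pi E B"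
  proof (rule set_eqI)
    fix f :: "nat set \<Rightarrow> bool"
    have "f \<in> (\<lambda>f. {e\<in>E. f e}) -` {F. F \<inter> D = T} \<longleftrightarrow> {e\<in>E. f e} \<inter> D = T" by simp
    also have "\<dots> \<longleftrightarrow> (\<forall>e\<in>D. f e = (e \<in> T))" using TD DE by blast
    also have "\<dots> \<longleftrightarrow> f \<in> Pi E B" unfolding B_def Pi_def using DE by auto
    finally show "f \<in> (\<lambda>f. {e\<in>E. f e}) -` {F. F \<inter> D = T} \<longleftrightarrow> f \<in> Pi E B" .
  qed
  have mB: "measure_pmf.prob (bernoulli_pmf p) (B e) = (if e \<in> D then (if e \<in> T then p else 1 - p) else 1)" for e
    using p by (auto simp: B_def measure_pmf_single)
  have "measure_pmf.prob (percolation E p) {F. F \<inter> D = T} =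
        measure_pmf.prob (Pi_pmf E False (\<lambda>_. bernoulli_pmf p)) (Pi E B)"
    unfolding percolation_def measure_map_pmf pre ..
  also have "\<dots> = (\<Prod>e\<in>E. measure_pmf.prob (bernoulli_pmf p) (B e))"
    by (rule measure_Pi_pmf_Pi[OF finE])
  also have "\<dots> = (\<Prod>e\<in>E. (if e \<in> D then (if e \<in> T then p else 1 - p) else 1))"
    by (simp add: mB)
  also have "\<dots> = (\<Prod>e\<in>E \<inter> {e. e \<in> D}. (if e \<in> T then p else 1 - p)) * (\<Prod>e\<in>E \<inter> - {e. e \<in> D}. 1)"
    by (rule prod.If_cases[OF finE])
  also have "\<dots> = (\<Prod>e\<in>D. (if e \<in> T then p else 1 - p))"
  proof -
    have "E \<inter> {e. e \<in> D} = D" using DE by blast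
    then show ?thesis by simp
  qed
  also have "\<dots> = (\<Prod>e\<in>T. p) * (\<Prod>e\<in>D - T. 1 - p)"
  proof -
    have fD: "finite D" using finE DE finite_subset by blast
    have "(\<Prod>e\<in>D. (if e \<in> T then p else 1 - p)) = (\<Prod>e\<in>D \<inter> {e. e \<in> T}. p) * (\<Prod>e\<in>D \<inter> - {e. e \<in> T}. 1 - p)"
      by (rule prod.If_cases[OF fD])
    moreover have "D \<inter> {e. e \<in> T} = T" using TD by blast
    moreover have "D \<inter> - {e. e \<in> T} = D - T" by blast
    ultimately show ?thesis by simp
  qed
  also have "\<dots> = p ^ card T * (1 - p) ^ card (D - T)" by simp
  finally show ?thesis .
qed

lemma card_edges_in:
  assumes sg: "simple_graph V E" and fS: "finite S"
  shows "card {e\<in>E. e \<subseteq> S} \<le> card S ^ 2"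
proof -
  have "{e\<in>E. e \<subseteq> S} \<subseteq> (\<lambda>(a, b). {a, b}) ` (S \<times> S)"
  proof
    fix e assume e: "e \<in> {e\<in>E. e \<subseteq> S}"
    then obtain a b where "e = {a, b}" using sg unfolding simple_graph_def by blast
    then show "e \<in> (\<lambda>(a, b). {a, b}) ` (S \<times> S)" using e by auto
  qed
  then have "card {e\<in>E. e \<subseteq> S} \<le> card ((\<lambda>(a, b). {a, b}) ` (S \<times> S))"
    by (rule card_mono[rotated]) (use fS in simp)
  also have "\<dots> \<le> card (S \<times> S)" by (rule card_image_le) (use fS in simp)
  also have "\<dots> = card S ^ 2" by (simp add: card_cartesian_product power2_eq_square)
  finally show ?thesis .
qed

context
  fixes V :: "nat set" and E :: "nat set set" and u :: nat and r :: nat and W :: "nat list set" and d :: nat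
  assumes sg: "simple_graph V E" and reg: "regular V E d" and uV: "u \<in> V" and ok: "gwok r W"
begin

lemma finE: "finite E"
proof -
  have "E \<subseteq> Pow V" using sg_edge_sub[OF sg] by blast
  moreover have "finite V" using sg by (simp add: simple_graph_def)
  ultimately show ?thesis using finite_subset by blast
qed

lemma card_T: "card (tedges \<phi> W) \<le> card W - 1"
proof -
  have "tedges \<phi> W = (\<lambda>w. {\<phi> (butlast w), \<phi> w}) ` (W - {[]})" unfolding tedges_def by auto
  then have "card (tedges \<phi> W) \<le> card (W - {[]})" by (simp add: card_image_le finW[OF sg reg uV ok])
  also have "\<dots> = card W - 1" using NilW[OF sg reg uV ok] by simp
  finally show ?thesis .
qed

lemma card_D:
  assumes e: "isemb V E u W \<phi>"
  shows "card (Dset E \<phi> W r) \<le> d * card {x\<in>W. length x < r} + card W ^ 2"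
proof -
  let ?I = "{x\<in>W. length x < r}"
  have fW: "finite W" by (rule finW[OF sg reg uV ok])
  have "Dset E \<phi> W r \<subseteq> (\<Union>x\<in>?I. {e\<in>E. \<phi> x \<in> e}) \<union> {e\<in>E. e \<subseteq> \<phi> ` W}"
    unfolding Dset_def by blast
  then have "card (Dset E \<phi> W r) \<le> card ((\<Union>x\<in>?I. {e\<in>E. \<phi> x \<in> e}) \<union> {e\<in>E. e \<subseteq> \<phi> ` W})"
  proof (rule card_mono[rotated])
    have "(\<Union>x\<in>?I. {e\<in>E. \<phi> x \<in> e}) \<union> {e\<in>E. e \<subseteq> \<phi> ` W} \<subseteq> E" by blast
    then show "finite ((\<Union>x\<in>?I. {e\<in>E. \<phi> x \<in> e}) \<union> {e\<in>E. e \<subseteq> \<phi> ` W})"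
      using finE finite_subset by blast
  qed
  also have "\<dots> \<le> card (\<Union>x\<in>?I. {e\<in>E. \<phi> x \<in> e}) + card {e\<in>E. e \<subseteq> \<phi> ` W}"
    by (rule card_Un_le)
  also have "card (\<Union>x\<in>?I. {e\<in>E. \<phi> x \<in> e}) \<le> (\<Sum>x\<in>?I. card {e\<in>E. \<phi> x \<in> e})"
    by (rule card_UN_le) (use fW in simp)
  also have "\<dots> = (\<Sum>x\<in>?I. d)"
  proof (rule sum.cong[OF refl])
    fix x assume "x \<in> ?I"
    then have "\<phi> x \<in> V" using e unfolding isemb_def by auto
    then show "card {e\<in>E. \<phi> x \<in> e} = d" using reg by (simp add: regular_def)
  qed
  also have "\<dots> = d * card ?I" by simp
  also have "card {e\<in>E. e \<subseteq> \<phi> ` W} \<le> card (\<phi> ` W) ^ 2"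
    by (rule card_edges_in[OF sg]) (use fW in simp)
  also have "\<dots> \<le> card W ^ 2" by (simp add: card_image_le fW power_mono)
  finally show ?thesis by simp
qed

lemma prob_event_lb:
  assumes e: "isemb V E u W \<phi>" and p: "0 \<le> p" "p \<le> 1"
  shows "measure_pmf.prob (percolation E p) {F. F \<inter> Dset E \<phi> W r = tedges \<phi> W}
     \<ge> p ^ (card W - 1) * (1 - p) ^ (d * card {x\<in>W. length x < r} + card W ^ 2)"
proof -
  have TD: "tedges \<phi> W \<subseteq> Dset E \<phi> W r"
  proof
    fix t assume "t \<in> tedges \<phi> W"
    then obtain w where w: "w \<in> W" "w \<noteq> []" "t = {\<phi> (butlast w), \<phi> w}" unfolding tedges_def by blast
    have tE: "t \<in> E" using e w unfolding isemb_def by auto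
    have "length w \<le> r" using ok w by (simp add: gwok_def)
    then have "length (butlast w) < r" using w(2) by (cases w rule: rev_cases) auto
    moreover have "butlast w \<in> W" using blW[OF sg reg uV ok w(1,2)] .
    ultimately have "\<exists>x\<in>W. length x < r \<and> \<phi> x \<in> t" using w(3) by blast
    then show "t \<in> Dset E \<phi> W r" unfolding Dset_def using tE by blast
  qed
  have DE: "Dset E \<phi> W r \<subseteq> E" unfolding Dset_def by blast
  have "p ^ (card W - 1) \<le> p ^ card (tedges \<phi> W)"
    by (rule power_decreasing[OF card_T p])
  moreover have "(1 - p) ^ (d * card {x\<in>W. length x < r} + card W ^ 2) \<le> (1 - p) ^ card (Dset E \<phi> W r - tedges \<phi> W)"
  proof (rule power_decreasing)
    have "card (Dset E \<phi> W r - tedges \<phi> W) \<le> card (Dset E \<phi> W r)"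
      by (rule card_mono) (use finE DE finite_subset in auto)
    then show "card (Dset E \<phi> W r - tedges \<phi> W) \<le> d * card {x\<in>W. length x < r} + card W ^ 2"
      using card_D[OF e] by linarith
  qed (use p in auto)
  ultimately have "p ^ (card W - 1) * (1 - p) ^ (d * card {x\<in>W. length x < r} + card W ^ 2)
      \<le> p ^ card (tedges \<phi> W) * (1 - p) ^ card (Dset E \<phi> W r - tedges \<phi> W)"
    by (rule mult_mono) (use p in auto)
  also have "\<dots> = measure_pmf.prob (percolation E p) {F. F \<inter> Dset E \<phi> W r = tedges \<phi> W}"
    by (rule measure_perc_event[symmetric, OF finE TD DE p])
  finally show ?thesis .
qed

end


lemma choose_fact_lb:
  assumes "k \<le> N + 1"
  shows "real (N choose k) * fact k \<ge> (real N - real k + 1) ^ k"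
proof -
  have "real (N choose k) * fact k = pochhammer (real N - real k + 1) k"
    by (simp add: binomial_gbinomial gbinomial_pochhammer')
  also have "\<dots> = (\<Prod>i = 0..<k. (real N - real k + 1) + real i)" by (rule pochhammer_prod)
  also have "\<dots> \<ge> (\<Prod>i = 0..<k. (real N - real k + 1))"
    by (rule prod_mono) (use assms in auto)
  finally show ?thesis by simp
qed

lemma term_lb:
  fixes c :: real and d m k :: nat
  assumes c: "c > 0" and km: "k \<le> m" and dm: "2 * m \<le> d" and d0: "d > 0"
  shows "real ((d - m) choose k) * (c / d) ^ k \<ge> (c * ((real d - 2 * real m) / d)) ^ k / fact k"
proof -
  have "k \<le> (d - m) + 1" using km dm by linarith
  then have "real ((d - m) choose k) * fact k \<ge> (real (d - m) - real k + 1) ^ k" by (rule choose_fact_lb)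
  moreover have "(real d - 2 * real m) ^ k \<le> (real (d - m) - real k + 1) ^ k"
    by (rule power_mono) (use km dm in auto)
  ultimately have A: "(real d - 2 * real m) ^ k \<le> real ((d - m) choose k) * fact k" by linarith
  have "c * ((real d - 2 * real m) / d) = (real d - 2 * real m) * (c / d)" by simp
  then have "(c * ((real d - 2 * real m) / d)) ^ k / fact k = (real d - 2 * real m) ^ k / fact k * (c / d) ^ k"
    by (simp only: power_mult_distrib) simp
  also have "\<dots> \<le> real ((d - m) choose k) * (c / d) ^ k"
  proof (rule mult_right_mono)
    show "(real d - 2 * real m) ^ k / fact k \<le> real ((d - m) choose k)"
      using A by (simp add: divide_le_eq)
  qed (use c in simp)
  finally show ?thesis .
qed

lemma one_minus_p_pow:
  fixes c :: real and d :: nat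
  assumes c: "c > 0" and dc: "2 * c \<le> d"
  shows "(1 - c / d) ^ N \<ge> exp (- (real N) * (c / d + 2 * (c / d) ^ 2))"
proof -
  have d0: "real d > 0" using c dc by linarith
  let ?p = "c / d"
  have p0: "0 \<le> ?p" using c d0 by simp
  have p2: "?p \<le> 1 / 2" using dc d0 by (simp add: field_simps)
  have l: "- ?p - 2 * ?p ^ 2 \<le> ln (1 - ?p)" by (rule ln_one_minus_pos_lower_bound[OF p0 p2])
  have pos: "1 - ?p > 0" using p2 by linarith
  have "(1 - ?p) ^ N = exp (ln (1 - ?p)) ^ N" by (simp only: exp_ln[OF pos])
  also have "\<dots> = exp (real N * ln (1 - ?p))" by (simp add: exp_of_nat_mult)
  also have "\<dots> \<ge> exp (- (real N) * (?p + 2 * ?p ^ 2))"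
  proof (rule exp_mono)
    have "real N * (- ?p - 2 * ?p ^ 2) \<le> real N * ln (1 - ?p)" by (rule mult_left_mono[OF l]) simp
    then show "- real N * (?p + 2 * ?p ^ 2) \<le> real N * ln (1 - ?p)" by (simp add: algebra_simps)
  qed
  finally show ?thesis .
qed

lemma arith_main:
  fixes c :: real and d m :: nat and n :: "'a \<Rightarrow> nat" and I :: "'a set"
  assumes c: "c > 0" and finI: "finite I" and Im: "card I \<le> m" and sumn: "(\<Sum>x\<in>I. n x) = m - 1"
    and m1: "m \<ge> 1" and Kd: "(2 + 2 * c + 2 * c ^ 2) * real m ^ 2 < real d" and dc: "2 * c \<le> real d"
  shows "(\<Prod>x\<in>I. real ((d - m) choose n x)) * (c / d) ^ (m - 1) * (1 - c / d) ^ (d * card I + m ^ 2)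
     \<ge> (\<Prod>x\<in>I. pmf (poisson_pmf c) (n x)) * (1 - (2 + 2 * c + 2 * c ^ 2) * real m ^ 2 / real d)"
proof -
  define K where "K = 2 + 2 * c + 2 * c ^ 2"
  have d0: "real d > 0" using c dc by linarith
  have K2: "K \<ge> 2" unfolding K_def using c by (simp add: add_nonneg_nonneg)
  have mm: "real m \<le> real m ^ 2" using m1 by (simp add: power2_eq_square)
  have dm: "2 * m \<le> d"
  proof -
    have "2 * real m \<le> K * real m ^ 2" by (rule mult_mono) (use K2 mm in auto)
    then show ?thesis using Kd unfolding K_def by linarith
  qed
  define p where "p = c / d"
  define q where "q = (real d - 2 * real m) / d"
  have p0: "p \<ge> 0" unfolding p_def using c d0 by simp
  have q0: "q \<ge> 0" unfolding q_def using dm d0 by simp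
  have nm: "n x \<le> m" if "x \<in> I" for x
  proof -
    have "n x \<le> (\<Sum>x\<in>I. n x)" by (rule member_le_sum) (use that finI in auto)
    then show ?thesis using sumn by simp
  qed
  have B: "(\<Prod>x\<in>I. real ((d - m) choose n x)) * p ^ (m - 1) \<ge> q ^ (m - 1) * (\<Prod>x\<in>I. c ^ n x / fact (n x))"
  proof -
    have "(\<Prod>x\<in>I. real ((d - m) choose n x)) * p ^ (m - 1) = (\<Prod>x\<in>I. real ((d - m) choose n x) * p ^ n x)"
    proof -
      have "(\<Prod>x\<in>I. real ((d - m) choose n x) * p ^ n x) = (\<Prod>x\<in>I. real ((d - m) choose n x)) * (\<Prod>x\<in>I. p ^ n x)"
        by (rule prod.distrib)
      also have "(\<Prod>x\<in>I. p ^ n x) = p ^ (m - 1)" unfolding power_sum[symmetric] sumn ..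
      finally show ?thesis by simp
    qed
    also have "\<dots> \<ge> (\<Prod>x\<in>I. (c * q) ^ n x / fact (n x))"
    proof (rule prod_mono)
      fix x assume x: "x \<in> I"
      have cq: "c * q \<ge> 0" using c q0 by simp
      have "0 \<le> (c * q) ^ n x / fact (n x)" using cq by simp
      moreover have "(c * q) ^ n x / fact (n x) \<le> real ((d - m) choose n x) * p ^ n x"
        unfolding p_def q_def by (rule term_lb[OF c nm[OF x] dm]) (use d0 in simp)
      ultimately show "0 \<le> (c * q) ^ n x / fact (n x) \<and> (c * q) ^ n x / fact (n x) \<le> real ((d - m) choose n x) * p ^ n x" by simp
    qed
    also have "(\<Prod>x\<in>I. (c * q) ^ n x / fact (n x)) = q ^ (m - 1) * (\<Prod>x\<in>I. c ^ n x / fact (n x))"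
    proof -
      have "(\<Prod>x\<in>I. (c * q) ^ n x / fact (n x)) = (\<Prod>x\<in>I. q ^ n x * (c ^ n x / fact (n x)))"
        by (intro prod.cong) (simp_all add: power_mult_distrib)
      also have "\<dots> = (\<Prod>x\<in>I. q ^ n x) * (\<Prod>x\<in>I. c ^ n x / fact (n x))" by (rule prod.distrib)
      also have "(\<Prod>x\<in>I. q ^ n x) = q ^ (m - 1)" unfolding power_sum[symmetric] sumn ..
      finally show ?thesis .
    qed
    finally show ?thesis .
  qed
  define a where "a = 2 * real m ^ 2 / d"
  define b where "b = (2 * c ^ 2 + 2 * c) * real m ^ 2 / d"
  have ab: "a + b = K * real m ^ 2 / d" unfolding a_def b_def K_def using d0 by (simp add: field_simps)
  have a0: "a \<ge> 0" "b \<ge> 0" unfolding a_def b_def using c d0 by auto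
  have a1: "a \<le> 1" "b \<le> 1"
  proof -
    have "K * real m ^ 2 / d < 1" using Kd d0 unfolding K_def by (simp add: field_simps)
    then show "a \<le> 1" "b \<le> 1" using ab a0 by linarith+
  qed
  have E: "q ^ (m - 1) \<ge> 1 - a"
  proof -
    have x: "- 1 \<le> - (2 * real m / d)" using dm d0 by (simp add: field_simps)
    have "1 + real (m - 1) * (- (2 * real m / d)) \<le> (1 + - (2 * real m / d)) ^ (m - 1)"
      by (rule Bernoulli_inequality[OF x])
    moreover have "1 + - (2 * real m / d) = q" unfolding q_def using d0 by (simp add: field_simps)
    moreover have "real (m - 1) * (2 * real m / d) \<le> a"
    proof -
      have "real (m - 1) * (2 * real m) \<le> 2 * real m ^ 2" using m1 by (simp add: power2_eq_square of_nat_diff)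
      then show ?thesis unfolding a_def using d0 by (simp add: divide_right_mono[of _ _ "real d", simplified] field_simps)
    qed
    ultimately show ?thesis by simp
  qed
  have C: "(1 - p) ^ (d * card I + m ^ 2) \<ge> exp (- c) ^ card I * (1 - b)"
  proof -
    define Y where "Y = 2 * c ^ 2 * card I / d + real m ^ 2 * p + 2 * real m ^ 2 * p ^ 2"
    have s1: "(1 - p) ^ (d * card I + m ^ 2) \<ge> exp (- real (d * card I + m ^ 2) * (p + 2 * p ^ 2))"
      unfolding p_def by (rule one_minus_p_pow[OF c dc])
    have s2: "- real (d * card I + m ^ 2) * (p + 2 * p ^ 2) = - c * real (card I) + (- Y)"
      unfolding p_def Y_def using d0 by (simp add: field_simps power2_eq_square)
    have e1: "exp (- c * real (card I) + - Y) = exp (- c * real (card I)) * exp (- Y)" by (rule exp_add)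
    have e2: "exp (- c * real (card I)) = exp (- c) ^ card I"
      using exp_of_nat_mult[of "card I" "-c"] by (simp add: mult.commute)
    have yb: "Y \<le> b"
    proof -
      have i1: "2 * c ^ 2 * card I / d \<le> 2 * c ^ 2 * real m ^ 2 / d"
      proof -
        have "real (card I) \<le> real m ^ 2" using Im mm by linarith
        then have "2 * c ^ 2 * card I \<le> 2 * c ^ 2 * real m ^ 2" using c by (simp add: mult_left_mono)
        then show ?thesis using d0 by (simp add: divide_right_mono)
      qed
      have i2: "2 * real m ^ 2 * p ^ 2 \<le> real m ^ 2 * p"
      proof -
        have "2 * p \<le> 1" unfolding p_def using dc d0 by (simp add: field_simps)
        then have "(2 * p) * p \<le> 1 * p" using p0 by (rule mult_right_mono)
        then have "real m ^ 2 * ((2 * p) * p) \<le> real m ^ 2 * p" by (simp add: mult_left_mono)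
        then show ?thesis by (simp add: power2_eq_square algebra_simps)
      qed
      have "Y \<le> 2 * c ^ 2 * real m ^ 2 / d + 2 * (real m ^ 2 * p)" using i1 i2 unfolding Y_def by linarith
      also have "\<dots> = b" unfolding b_def p_def using d0 by (simp add: field_simps)
      finally show ?thesis .
    qed
    have "exp (- Y) \<ge> 1 - Y" using exp_ge_add_one_self[of "- Y"] by simp
    then have "exp (- Y) \<ge> 1 - b" using yb by linarith
    then have P: "exp (- c) ^ card I * exp (- Y) \<ge> exp (- c) ^ card I * (1 - b)" by (simp add: mult_left_mono)
    have Q: "exp (- c) ^ card I * exp (- Y) \<le> (1 - p) ^ (d * card I + m ^ 2)"
      using s1 unfolding s2 e1 e2 .
    show ?thesis using P Q by (rule order_trans)
  qed
  have Pc: "(\<Prod>x\<in>I. pmf (poisson_pmf c) (n x)) = (\<Prod>x\<in>I. c ^ n x / fact (n x)) * exp (- c) ^ card I"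
  proof -
    have "(\<Prod>x\<in>I. pmf (poisson_pmf c) (n x)) = (\<Prod>x\<in>I. c ^ n x / fact (n x) * exp (- c))"
      using c by (simp add: pmf_poisson)
    also have "\<dots> = (\<Prod>x\<in>I. c ^ n x / fact (n x)) * (\<Prod>x\<in>I. exp (- c))" by (rule prod.distrib)
    finally show ?thesis by simp
  qed
  have G0: "(\<Prod>x\<in>I. c ^ n x / fact (n x)) \<ge> 0" using c by (simp add: prod_nonneg)
  have "(\<Prod>x\<in>I. real ((d - m) choose n x)) * p ^ (m - 1) * (1 - p) ^ (d * card I + m ^ 2)
      \<ge> (q ^ (m - 1) * (\<Prod>x\<in>I. c ^ n x / fact (n x))) * (exp (- c) ^ card I * (1 - b))"
    by (rule mult_mono[OF B C]) (use q0 G0 a0 a1 p0 in \<open>auto intro!: mult_nonneg_nonneg prod_nonneg\<close>)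
  moreover have "(q ^ (m - 1) * (\<Prod>x\<in>I. c ^ n x / fact (n x))) * (exp (- c) ^ card I * (1 - b))
      = (\<Prod>x\<in>I. pmf (poisson_pmf c) (n x)) * (q ^ (m - 1) * (1 - b))"
    by (simp add: Pc)
  moreover have "q ^ (m - 1) * (1 - b) \<ge> (1 - a) * (1 - b)"
    by (rule mult_right_mono[OF E]) (use a1 in simp)
  moreover have "(1 - a) * (1 - b) \<ge> 1 - K * real m ^ 2 / d"
    using ab a0 by (simp add: algebra_simps)
  moreover have "(\<Prod>x\<in>I. pmf (poisson_pmf c) (n x)) \<ge> 0" by (simp add: prod_nonneg)
  ultimately have "(\<Prod>x\<in>I. real ((d - m) choose n x)) * p ^ (m - 1) * (1 - p) ^ (d * card I + m ^ 2)
      \<ge> (\<Prod>x\<in>I. pmf (poisson_pmf c) (n x)) * (1 - K * real m ^ 2 / d)"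
    by (smt (verit) mult_left_mono)
  then show ?thesis unfolding p_def K_def .
qed


lemma pmf_summable: "pmf p summable_on A"
proof -
  have "Infinite_Set_Sum.abs_summable_on (pmf p) A" by (rule pmf_abs_summable)
  then have "Infinite_Sum.abs_summable_on (pmf p) A" using abs_summable_equivalent by blast
  then show ?thesis by (rule abs_summable_summable)
qed

lemma pmf_infsum_1: "infsum (pmf p) UNIV = 1"
proof -
  have "infsetsum (pmf p) UNIV = 1" by (rule infsetsum_pmf_eq_1) simp
  moreover have "infsetsum (pmf p) UNIV = infsum (pmf p) UNIV" by (rule infsetsum_infsum[OF pmf_abs_summable])
  ultimately show ?thesis by simp
qed

lemma dTV_min:
  assumes "finite \<Omega>"
  shows "dTV \<mu> \<nu> \<le> 1 - (\<Sum>\<omega>\<in>\<Omega>. min (pmf \<mu> \<omega>) (pmf \<nu> \<omega>))"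
proof -
  let ?m = "\<lambda>\<omega>. min (pmf \<mu> \<omega>) (pmf \<nu> \<omega>)"
  have sa: "pmf \<mu> summable_on UNIV" and sb: "pmf \<nu> summable_on UNIV" by (rule pmf_summable)+
  have sm: "?m summable_on UNIV"
  proof -
    have "Infinite_Sum.abs_summable_on ?m UNIV"
      by (rule Infinite_Sum.abs_summable_on_comparison_test'[OF sa]) auto
    then show ?thesis by (rule abs_summable_summable)
  qed
  have eq: "(\<lambda>\<omega>. \<bar>pmf \<mu> \<omega> - pmf \<nu> \<omega>\<bar>) = (\<lambda>\<omega>. pmf \<mu> \<omega> + pmf \<nu> \<omega> + (- 2) * ?m \<omega>)"
    by (auto simp: min_def)
  have "(\<Sum>\<^sub>\<infinity>\<omega>. \<bar>pmf \<mu> \<omega> - pmf \<nu> \<omega>\<bar>) = (\<Sum>\<^sub>\<infinity>\<omega>. pmf \<mu> \<omega> + pmf \<nu> \<omega> + (- 2) * ?m \<omega>)"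
    unfolding eq ..
  also have "\<dots> = (\<Sum>\<^sub>\<infinity>\<omega>. pmf \<mu> \<omega> + pmf \<nu> \<omega>) + (\<Sum>\<^sub>\<infinity>\<omega>. (- 2) * ?m \<omega>)"
    by (rule infsum_add) (use summable_on_add[OF sa sb] summable_on_cmult_right[OF sm, of "- 2"] in \<open>simp_all only:\<close>)
  also have "(\<Sum>\<^sub>\<infinity>\<omega>. pmf \<mu> \<omega> + pmf \<nu> \<omega>) = 2"
    using infsum_add[OF sa sb] pmf_infsum_1[of \<mu>] pmf_infsum_1[of \<nu>] by simp
  also have "(\<Sum>\<^sub>\<infinity>\<omega>. (- 2) * ?m \<omega>) = (- 2) * infsum ?m UNIV"
    by (rule infsum_cmult_right') 
  finally have A: "(\<Sum>\<^sub>\<infinity>\<omega>. \<bar>pmf \<mu> \<omega> - pmf \<nu> \<omega>\<bar>) = 2 - 2 * infsum ?m UNIV" by simp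
  have "(\<Sum>\<omega>\<in>\<Omega>. ?m \<omega>) = infsum ?m \<Omega>" by (rule infsum_finite[symmetric, OF assms])
  also have "\<dots> \<le> infsum ?m UNIV"
    by (rule infsum_mono2) (use summable_on_finite[OF assms] sm in auto)
  finally show ?thesis unfolding dTV_def A by simp
qed

lemma dTV_lower:
  fixes \<mu> :: "'b pmf" and \<nu> :: "'a pmf" and g :: "'a \<Rightarrow> 'b" and S :: "'a set" and \<rho> :: "'a \<Rightarrow> real"
  assumes finS: "finite S" and rho1: "\<And>W. W \<in> S \<Longrightarrow> \<rho> W \<le> 1"
    and low: "\<And>\<omega>. \<omega> \<in> g ` S \<Longrightarrow> pmf \<mu> \<omega> \<ge> (\<Sum>W\<in>{W\<in>S. g W = \<omega>}. pmf \<nu> W * \<rho> W)"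
  shows "dTV \<mu> (map_pmf g \<nu>) \<le> 1 - (\<Sum>W\<in>S. pmf \<nu> W * \<rho> W)"
proof -
  have "dTV \<mu> (map_pmf g \<nu>) \<le> 1 - (\<Sum>\<omega>\<in>g ` S. min (pmf \<mu> \<omega>) (pmf (map_pmf g \<nu>) \<omega>))"
    by (rule dTV_min) (use finS in simp)
  moreover have "(\<Sum>\<omega>\<in>g ` S. min (pmf \<mu> \<omega>) (pmf (map_pmf g \<nu>) \<omega>)) \<ge>
      (\<Sum>\<omega>\<in>g ` S. \<Sum>W\<in>{W\<in>S. g W = \<omega>}. pmf \<nu> W * \<rho> W)"
  proof (rule sum_mono)
    fix \<omega> assume \<omega>: "\<omega> \<in> g ` S"
    have "(\<Sum>W\<in>{W\<in>S. g W = \<omega>}. pmf \<nu> W * \<rho> W) \<le> (\<Sum>W\<in>{W\<in>S. g W = \<omega>}. pmf \<nu> W)"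
      by (rule sum_mono) (use rho1 in \<open>auto intro: mult_left_le\<close>)
    also have "\<dots> = measure_pmf.prob \<nu> {W\<in>S. g W = \<omega>}"
      by (rule measure_measure_pmf_finite[symmetric]) (use finS in simp)
    also have "\<dots> \<le> measure_pmf.prob \<nu> (g -` {\<omega>})"
      by (rule measure_pmf.finite_measure_mono) auto
    also have "\<dots> = pmf (map_pmf g \<nu>) \<omega>" by (simp add: pmf_map)
    finally show "(\<Sum>W\<in>{W\<in>S. g W = \<omega>}. pmf \<nu> W * \<rho> W) \<le> min (pmf \<mu> \<omega>) (pmf (map_pmf g \<nu>) \<omega>)"
      using low[OF \<omega>] by simp
  qed
  moreover have "(\<Sum>\<omega>\<in>g ` S. \<Sum>W\<in>{W\<in>S. g W = \<omega>}. pmf \<nu> W * \<rho> W) = (\<Sum>W\<in>S. pmf \<nu> W * \<rho> W)"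
    by (rule sum.image_gen[symmetric, OF finS])
  ultimately show ?thesis by linarith
qed


lemma sum_nch:
  assumes ok: "gwok r W"
  shows "(\<Sum>x\<in>{x\<in>W. length x < r}. nch W x) = card W - 1"
proof -
  let ?I = "{x\<in>W. length x < r}"
  define Ch where "Ch = (\<lambda>x. {w\<in>W. w \<noteq> [] \<and> butlast w = x})"
  have finW: "finite W" using ok by (simp add: gwok_def)
  have NilW: "[] \<in> W" using ok by (simp add: gwok_def)
  have cardCh: "card (Ch x) = nch W x" if "x \<in> W" for x
  proof -
    have "Ch x = (\<lambda>j. x @ [j]) ` {j. x @ [j] \<in> W}"
    proof (rule set_eqI)
      fix w show "w \<in> Ch x \<longleftrightarrow> w \<in> (\<lambda>j. x @ [j]) ` {j. x @ [j] \<in> W}"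
      proof
        assume "w \<in> Ch x"
        then have w: "w \<in> W" "w \<noteq> []" "butlast w = x" unfolding Ch_def by auto
        then have "w = x @ [last w]" using append_butlast_last_id[of w] by simp
        then show "w \<in> (\<lambda>j. x @ [j]) ` {j. x @ [j] \<in> W}" using w(1) by (intro image_eqI[of _ _ "last w"]) auto
      next
        assume "w \<in> (\<lambda>j. x @ [j]) ` {j. x @ [j] \<in> W}"
        then show "w \<in> Ch x" unfolding Ch_def by auto
      qed
    qed
    then have "card (Ch x) = card {j. x @ [j] \<in> W}" by (simp add: card_image inj_on_def)
    then show ?thesis by (simp add: nch_def)
  qed
  have U: "W - {[]} = (\<Union>x\<in>?I. Ch x)"
  proof
    show "W - {[]} \<subseteq> (\<Union>x\<in>?I. Ch x)"
    proof
      fix w assume w: "w \<in> W - {[]}"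
      then have "butlast w \<in> W" "length w \<le> r" using ok by (auto simp: gwok_def)
      moreover have "length (butlast w) < length w" using w by (cases w rule: rev_cases) auto
      ultimately have "butlast w \<in> ?I" by simp
      moreover have "w \<in> Ch (butlast w)" using w unfolding Ch_def by auto
      ultimately show "w \<in> (\<Union>x\<in>?I. Ch x)" by blast
    qed
    show "(\<Union>x\<in>?I. Ch x) \<subseteq> W - {[]}" unfolding Ch_def by auto
  qed
  have "card W - 1 = card (W - {[]})" using NilW finW by simp
  also have "\<dots> = (\<Sum>x\<in>?I. card (Ch x))" unfolding U
    by (rule card_UN_disjoint) (use finW in \<open>auto simp: Ch_def\<close>)
  also have "\<dots> = (\<Sum>x\<in>?I. nch W x)" by (rule sum.cong) (use cardCh in auto)
  finally show ?thesis by simp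
qed

lemma labels_lt_card:
  assumes ok: "gwok r W"
  shows "w \<in> W \<Longrightarrow> j \<in> set w \<Longrightarrow> j < card W"
proof (induction w rule: rev_induct)
  case Nil then show ?case by simp
next
  case (snoc i x)
  have finW: "finite W" using ok by (simp add: gwok_def)
  have xW: "x \<in> W" using ok snoc.prems(1) unfolding gwok_def by (metis butlast_snoc snoc_eq_iff_butlast)
  show ?case
  proof (cases "j \<in> set x")
    case True then show ?thesis using snoc.IH xW by blast
  next
    case False
    then have j: "j = i" using snoc.prems(2) by simp
    have "i \<in> {j. x @ [j] \<in> W}" using snoc.prems(1) by simp
    then have "i < nch W x" using gw_children[OF ok xW] by simp
    also have "nch W x \<le> card W"
    proof -
      have "(\<lambda>j. x @ [j]) ` {j. x @ [j] \<in> W} \<subseteq> W" by auto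
      then have "card ((\<lambda>j. x @ [j]) ` {j. x @ [j] \<in> W}) \<le> card W" using finW by (simp add: card_mono)
      then show ?thesis by (simp add: nch_def card_image inj_on_def)
    qed
    finally show ?thesis using j by simp
  qed
qed

lemma finite_small_gw:
  assumes c: "c > 0"
  shows "finite {W\<in>set_pmf (gw_words c r). card W < N}"
proof -
  let ?L = "{xs. set xs \<subseteq> {..<N} \<and> length xs \<le> r}"
  have "finite ?L" by (rule finite_lists_length_le) simp
  moreover have "{W\<in>set_pmf (gw_words c r). card W < N} \<subseteq> Pow ?L"
  proof
    fix W assume W: "W \<in> {W\<in>set_pmf (gw_words c r). card W < N}"
    then have ok: "gwok r W" using gw_ok[OF c] by blast
    have "W \<subseteq> ?L"
    proof
      fix w assume w: "w \<in> W"
      have "set w \<subseteq> {..<N}" using labels_lt_card[OF ok w] W by fastforce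
      moreover have "length w \<le> r" using ok w by (simp add: gwok_def)
      ultimately show "w \<in> ?L" by simp
    qed
    then show "W \<in> Pow ?L" by simp
  qed
  ultimately show ?thesis by (meson finite_Pow_iff finite_subset)
qed

lemma per_W:
  fixes c :: real and V :: "nat set" and E :: "nat set set" and d :: nat
  assumes c: "c > 0" and sg: "simple_graph V E" and reg: "regular V E d" and uV: "u \<in> V"
    and W: "W \<in> set_pmf (gw_words c r)"
    and Kd: "(2 + 2 * c + 2 * c ^ 2) * real (card W) ^ 2 < real d" and dc: "2 * c \<le> real d"
  shows "(\<Sum>\<phi>\<in>Mon V E u W. measure_pmf.prob (percolation E (c / d)) {F. F \<inter> Dset E \<phi> W r = tedges \<phi> W})
     \<ge> pmf (gw_words c r) W * (1 - (2 + 2 * c + 2 * c ^ 2) * real (card W) ^ 2 / real d)"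
proof -
  have ok: "gwok r W" using gw_ok[OF c W] .
  let ?I = "{x\<in>W. length x < r}"
  let ?m = "card W"
  define p where "p = c / d"
  define LB where "LB = p ^ (?m - 1) * (1 - p) ^ (d * card ?I + ?m ^ 2)"
  have d0: "real d > 0" using c dc by linarith
  have p: "0 \<le> p" "p \<le> 1" unfolding p_def using c dc d0 by (auto simp: field_simps)
  have LB0: "LB \<ge> 0" unfolding LB_def using p by simp
  have finW: "finite W" using ok by (simp add: gwok_def)
  have m1: "?m \<ge> 1" using ok finW by (metis One_nat_def Suc_leI card_gt_0_iff empty_iff gwok_def)
  have "(\<Sum>\<phi>\<in>Mon V E u W. measure_pmf.prob (percolation E (c / d)) {F. F \<inter> Dset E \<phi> W r = tedges \<phi> W})
      \<ge> (\<Sum>\<phi>\<in>Mon V E u W. LB)"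
  proof (rule sum_mono)
    fix \<phi> assume "\<phi> \<in> Mon V E u W"
    then have e: "isemb V E u W \<phi>" unfolding Mon_def[OF sg reg uV ok] by simp
    show "LB \<le> measure_pmf.prob (percolation E (c / d)) {F. F \<inter> Dset E \<phi> W r = tedges \<phi> W}"
      unfolding LB_def p_def by (rule prob_event_lb[OF sg reg uV ok e]) (use p in \<open>auto simp: p_def\<close>)
  qed
  moreover have "(\<Sum>\<phi>\<in>Mon V E u W. LB) = real (card (Mon V E u W)) * LB" by simp
  moreover have "real (card (Mon V E u W)) \<ge> (\<Prod>x\<in>?I. real ((d - ?m) choose nch W x))"
  proof -
    have "(\<Prod>x\<in>?I. (d - card W) choose nch W x) \<le> card (Mon V E u W)" by (rule count_Mon[OF sg reg uV ok])
    then show ?thesis by (metis of_nat_le_iff of_nat_prod)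
  qed
  moreover have "(\<Prod>x\<in>?I. real ((d - ?m) choose nch W x)) * LB \<ge>
      (\<Prod>x\<in>?I. pmf (poisson_pmf c) (nch W x)) * (1 - (2 + 2 * c + 2 * c ^ 2) * real ?m ^ 2 / real d)"
    unfolding LB_def p_def mult.assoc[symmetric]
  proof (rule arith_main[OF c])
    show "finite ?I" using finW by simp
    show "card ?I \<le> ?m" using finW by (simp add: card_mono)
    show "(\<Sum>x\<in>?I. nch W x) = ?m - 1" by (rule sum_nch[OF ok])
  qed (use m1 Kd dc in auto)
  moreover have "pmf (gw_words c r) W = (\<Prod>x\<in>?I. pmf (poisson_pmf c) (nch W x))" by (rule pmf_gw[OF c W])
  ultimately show ?thesis using LB0 by (smt (verit) mult_right_mono)
qed

lemma sq_le_4pow: "real n ^ 2 \<le> 4 ^ n"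
proof -
  have "n < 2 ^ n" by (rule less_exp)
  then have "real n \<le> 2 ^ n" by (metis less_imp_le of_nat_le_iff of_nat_numeral of_nat_power)
  then have "real n ^ 2 \<le> (2 ^ n) ^ 2" by (rule power_mono) simp
  also have "((2::real) ^ n) ^ 2 = 2 ^ n * 2 ^ n" by (simp add: power2_eq_square)
  also have "\<dots> = 4 ^ n" by (simp add: power_mult_distrib[symmetric])
  finally show ?thesis .
qed

lemma main_bound:
  fixes c :: real and V :: "nat set" and E :: "nat set set" and d :: nat
  assumes c: "c > 0" and sg: "simple_graph V E" and reg: "regular V E d" and uV: "u \<in> V"
    and dc: "2 * c \<le> real d"
  shows "dTV (map_pmf (\<lambda>F. rclass (ball V F u r)) (percolation E (c / real d))) (map_pmf rclass (GW_trunc c r))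
     \<le> 2 * (2 + 2 * c + 2 * c ^ 2) * enn2real (\<integral>\<^sup>+W. ennreal (4 ^ card W) \<partial>measure_pmf (gw_words c r)) / real d"
proof -
  define K where "K = 2 + 2 * c + 2 * c ^ 2"
  define \<nu> where "\<nu> = gw_words c r"
  define I4 where "I4 = (\<integral>\<^sup>+W. ennreal (4 ^ card W) \<partial>measure_pmf \<nu>)"
  define C where "C = enn2real I4"
  define g where "g = (\<lambda>W::nat list set. rclass (word_tree W))"
  define perc where "perc = percolation E (c / real d)"
  define S where "S = {W::nat list set. W \<in> set_pmf \<nu> \<and> K * real (card W) ^ 2 < real d}"
  define \<rho> where "\<rho> = (\<lambda>W::nat list set. 1 - K * real (card W) ^ 2 / real d)"
  have d0: "real d > 0" using c dc by linarith
  have K2: "K \<ge> 2" unfolding K_def using c by (simp add: add_nonneg_nonneg)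
  have I4fin: "I4 \<noteq> \<top>" unfolding I4_def \<nu>_def by (rule gw_moment[OF c])
  have I4C: "I4 = ennreal C" unfolding C_def using I4fin by (simp add: ennreal_enn2real_if)
  have C0: "C \<ge> 0" unfolding C_def by simp
  have hN: "map_pmf rclass (GW_trunc c r) = map_pmf g \<nu>"
    unfolding GW_trunc_def g_def \<nu>_def by (simp add: map_pmf_comp)
  have finS: "finite S"
  proof -
    have "S \<subseteq> {W\<in>set_pmf (gw_words c r). card W < d}"
    proof
      fix W assume "W \<in> S"
      then have W: "W \<in> set_pmf \<nu>" "K * real (card W) ^ 2 < real d" unfolding S_def by auto
      have "real (card W) \<le> real (card W) ^ 2" by (cases "card W") (auto simp: power2_eq_square)
      moreover have "real (card W) ^ 2 \<le> K * real (card W) ^ 2" using K2 by (simp add: mult_le_cancel_right1)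
      ultimately have "real (card W) < real d" using W(2) by linarith
      then show "W \<in> {W\<in>set_pmf (gw_words c r). card W < d}" using W(1) unfolding \<nu>_def by simp
    qed
    then show ?thesis using finite_small_gw[OF c] finite_subset by blast
  qed
  have suppE: "F \<subseteq> E" if "F \<in> set_pmf perc" for F
    using that unfolding perc_def percolation_def by auto
  have low: "pmf (map_pmf (\<lambda>F. rclass (ball V F u r)) perc) \<omega> \<ge> (\<Sum>W\<in>{W\<in>S. g W = \<omega>}. pmf \<nu> W * \<rho> W)"
    if \<omega>: "\<omega> \<in> g ` S" for \<omega>
  proof -
    define SW where "SW = {W\<in>S. g W = \<omega>}"
    define J where "J = Sigma SW (\<lambda>W. Mon V E u W)"
    define Ev where "Ev = (\<lambda>(W, \<phi>). {F. F \<inter> Dset E \<phi> W r = tedges \<phi> W} \<inter> set_pmf perc)"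
    have finSW: "finite SW" unfolding SW_def using finS by simp
    have okSW: "gwok r W" if "W \<in> SW" for W using that gw_ok[OF c] unfolding SW_def S_def \<nu>_def by blast
    have finMon: "finite (Mon V E u W)" if "W \<in> SW" for W
      using finite_Mon[OF sg reg uV okSW[OF that]] by simp
    have finJ: "finite J" unfolding J_def using finSW finMon by (simp add: finite_SigmaI)
    have inJ: "W \<in> SW \<and> isemb V E u W \<phi>" if "(W, \<phi>) \<in> J" for W \<phi>
      using that unfolding J_def using Mon_def[OF sg reg uV] okSW by auto
    have sub: "(\<Union>j\<in>J. Ev j) \<subseteq> (\<lambda>F. rclass (ball V F u r)) -` {\<omega>}"
    proof
      fix F assume "F \<in> (\<Union>j\<in>J. Ev j)"
      then obtain W \<phi> where j: "(W, \<phi>) \<in> J" and F: "F \<inter> Dset E \<phi> W r = tedges \<phi> W" "F \<in> set_pmf perc"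
        unfolding Ev_def by auto
      have W: "W \<in> SW" and e: "isemb V E u W \<phi>" using inJ[OF j] by auto
      have "rclass (ball V F u r) = rclass (word_tree W)"
        by (rule rclass_ball[OF sg uV okSW[OF W] e suppE[OF F(2)] F(1)])
      also have "\<dots> = \<omega>" using W unfolding SW_def g_def by simp
      finally show "F \<in> (\<lambda>F. rclass (ball V F u r)) -` {\<omega>}" by simp
    qed
    have disj: "disjoint_family_on Ev J"
      unfolding disjoint_family_on_def
    proof (intro ballI impI)
      fix j1 j2 assume j: "j1 \<in> J" "j2 \<in> J" "j1 \<noteq> j2"
      obtain W1 \<phi>1 where j1: "j1 = (W1, \<phi>1)" by (cases j1)
      obtain W2 \<phi>2 where j2: "j2 = (W2, \<phi>2)" by (cases j2)
      show "Ev j1 \<inter> Ev j2 = {}"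
      proof (rule ccontr)
        assume "Ev j1 \<inter> Ev j2 \<noteq> {}"
        then obtain F where F1: "F \<inter> Dset E \<phi>1 W1 r = tedges \<phi>1 W1" and F2: "F \<inter> Dset E \<phi>2 W2 r = tedges \<phi>2 W2"
          and Fs: "F \<in> set_pmf perc" unfolding Ev_def j1 j2 by auto
        have a1: "W1 \<in> SW" "isemb V E u W1 \<phi>1" using inJ j(1) j1 by auto
        have a2: "W2 \<in> SW" "isemb V E u W2 \<phi>2" using inJ j(2) j2 by auto
        have "ball V F u r = (\<phi>1 ` W1, tedges \<phi>1 W1, u)"
          by (rule ball_eq[OF sg uV okSW[OF a1(1)] a1(2) suppE[OF Fs] F1])
        moreover have "ball V F u r = (\<phi>2 ` W2, tedges \<phi>2 W2, u)"
          by (rule ball_eq[OF sg uV okSW[OF a2(1)] a2(2) suppE[OF Fs] F2])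
        ultimately have "tedges \<phi>1 W1 = tedges \<phi>2 W2" by simp
        then have "W1 = W2 \<and> \<phi>1 = \<phi>2" by (rule emb_unique[OF okSW[OF a1(1)] okSW[OF a2(1)] a1(2) a2(2)])
        then show False using j(3) j1 j2 by simp
      qed
    qed
    have "pmf (map_pmf (\<lambda>F. rclass (ball V F u r)) perc) \<omega> = measure_pmf.prob perc ((\<lambda>F. rclass (ball V F u r)) -` {\<omega>})"
      by (rule pmf_map)
    also have "\<dots> \<ge> measure_pmf.prob perc (\<Union>j\<in>J. Ev j)"
      by (rule measure_pmf.finite_measure_mono[OF sub]) simp
    also have "measure_pmf.prob perc (\<Union>j\<in>J. Ev j) = (\<Sum>j\<in>J. measure_pmf.prob perc (Ev j))"
      by (rule measure_pmf.finite_measure_finite_Union[OF finJ _ disj]) simp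
    also have "\<dots> = (\<Sum>(W, \<phi>)\<in>J. measure_pmf.prob perc {F. F \<inter> Dset E \<phi> W r = tedges \<phi> W})"
      by (rule sum.cong) (auto simp: Ev_def measure_Int_set_pmf split: prod.splits)
    also have "\<dots> = (\<Sum>W\<in>SW. \<Sum>\<phi>\<in>Mon V E u W. measure_pmf.prob perc {F. F \<inter> Dset E \<phi> W r = tedges \<phi> W})"
      unfolding J_def by (rule sum.Sigma[symmetric]) (use finSW finMon in auto)
    also have "\<dots> \<ge> (\<Sum>W\<in>SW. pmf \<nu> W * \<rho> W)"
    proof (rule sum_mono)
      fix W assume W: "W \<in> SW"
      then have W': "W \<in> set_pmf (gw_words c r)" "K * real (card W) ^ 2 < real d"
        unfolding SW_def S_def \<nu>_def by auto
      show "pmf \<nu> W * \<rho> W \<le> (\<Sum>\<phi>\<in>Mon V E u W. measure_pmf.prob perc {F. F \<inter> Dset E \<phi> W r = tedges \<phi> W})"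
        unfolding perc_def \<rho>_def \<nu>_def using per_W[OF c sg reg uV W'(1) _ dc] W'(2) unfolding K_def by simp
    qed
    finally show ?thesis unfolding SW_def .
  qed
  have "dTV (map_pmf (\<lambda>F. rclass (ball V F u r)) perc) (map_pmf g \<nu>) \<le> 1 - (\<Sum>W\<in>S. pmf \<nu> W * \<rho> W)"
    by (rule dTV_lower[OF finS _ low]) (use K2 d0 in \<open>auto simp: \<rho>_def\<close>)
  moreover have "(\<Sum>W\<in>S. pmf \<nu> W * \<rho> W) \<ge> 1 - 2 * K * C / real d"
  proof -
    have split: "(\<Sum>W\<in>S. pmf \<nu> W * \<rho> W) = (\<Sum>W\<in>S. pmf \<nu> W) - K / real d * (\<Sum>W\<in>S. pmf \<nu> W * real (card W) ^ 2)"
      unfolding \<rho>_def by (simp add: sum_subtractf sum_distrib_left algebra_simps)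
    have mS: "(\<Sum>W\<in>S. pmf \<nu> W) = measure_pmf.prob \<nu> S" by (rule measure_measure_pmf_finite[symmetric, OF finS])
    have compl: "measure_pmf.prob \<nu> S = 1 - measure_pmf.prob \<nu> (- S)"
      using measure_pmf.prob_compl[of "- S" \<nu>] by (simp add: Compl_eq_Diff_UNIV[symmetric])
    have big: "measure_pmf.prob \<nu> (- S) \<le> K * C / real d"
    proof -
      let ?A = "{W. real d \<le> K * real (card W) ^ 2}"
      have "measure_pmf.prob \<nu> (- S) = measure_pmf.prob \<nu> (- S \<inter> set_pmf \<nu>)" by (simp add: measure_Int_set_pmf)
      also have "\<dots> \<le> measure_pmf.prob \<nu> ?A"
        by (rule measure_pmf.finite_measure_mono) (auto simp: S_def)
      finally have a: "measure_pmf.prob \<nu> (- S) \<le> measure_pmf.prob \<nu> ?A" .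
      have "ennreal (measure_pmf.prob \<nu> ?A) = emeasure (measure_pmf \<nu>) ?A" by (simp add: measure_pmf.emeasure_eq_measure)
      also have "\<dots> = (\<integral>\<^sup>+W. indicator ?A W \<partial>measure_pmf \<nu>)" by simp
      also have "\<dots> \<le> (\<integral>\<^sup>+W. ennreal (K / real d) * ennreal (4 ^ card W) \<partial>measure_pmf \<nu>)"
      proof (rule nn_integral_mono)
        fix W
        show "indicator ?A W \<le> ennreal (K / real d) * ennreal (4 ^ card W)"
        proof (cases "W \<in> ?A")
          case True
          then have "1 \<le> K * real (card W) ^ 2 / real d" using d0 by (simp add: field_simps)
          also have "\<dots> \<le> K / real d * 4 ^ card W"
            using sq_le_4pow[of "card W"] K2 d0 by (simp add: divide_right_mono mult_left_mono)
          finally have "ennreal 1 \<le> ennreal (K / real d * 4 ^ card W)" by (rule ennreal_leI)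
          moreover have "ennreal (K / real d) * ennreal (4 ^ card W) = ennreal (K / real d * 4 ^ card W)"
            by (rule ennreal_mult[symmetric]) (use K2 d0 in auto)
          moreover have "indicator ?A W = (1::ennreal)" using True by simp
          ultimately show ?thesis by simp
        qed simp
      qed
      also have "\<dots> = ennreal (K / real d) * I4" unfolding I4_def by (rule nn_integral_cmult) simp
      also have "\<dots> = ennreal (K * C / real d)" unfolding I4C using K2 d0 C0 by (simp add: ennreal_mult[symmetric])
      finally have "measure_pmf.prob \<nu> ?A \<le> K * C / real d"
        using K2 d0 C0 by (subst (asm) ennreal_le_iff) auto
      then show ?thesis using a by linarith
    qed
    have mom: "(\<Sum>W\<in>S. pmf \<nu> W * real (card W) ^ 2) \<le> C"
    proof -
      have "(\<Sum>W\<in>S. pmf \<nu> W * real (card W) ^ 2) \<le> (\<Sum>W\<in>S. pmf \<nu> W * 4 ^ card W)"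
        by (rule sum_mono) (simp add: mult_left_mono sq_le_4pow)
      moreover have "ennreal (\<Sum>W\<in>S. pmf \<nu> W * 4 ^ card W) \<le> I4"
      proof -
        have "(\<integral>\<^sup>+W. ennreal (4 ^ card W * indicator S W) \<partial>measure_pmf \<nu>) = (\<Sum>W\<in>S. ennreal (4 ^ card W * indicator S W) * ennreal (pmf \<nu> W))"
          by (rule nn_integral_measure_pmf_support[OF finS]) auto
        also have "\<dots> = ennreal (\<Sum>W\<in>S. pmf \<nu> W * 4 ^ card W)"
          by (subst sum_ennreal[symmetric]) (auto simp: ennreal_mult[symmetric] mult.commute intro!: sum.cong)
        finally have "ennreal (\<Sum>W\<in>S. pmf \<nu> W * 4 ^ card W) = (\<integral>\<^sup>+W. ennreal (4 ^ card W * indicator S W) \<partial>measure_pmf \<nu>)" by simp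
        also have "\<dots> \<le> I4" unfolding I4_def
          by (rule nn_integral_mono) (auto simp: indicator_def)
        finally show ?thesis .
      qed
      then have "(\<Sum>W\<in>S. pmf \<nu> W * 4 ^ card W) \<le> C" unfolding I4C using C0 by (simp add: ennreal_le_iff)
      ultimately show ?thesis by linarith
    qed
    have "K / real d * (\<Sum>W\<in>S. pmf \<nu> W * real (card W) ^ 2) \<le> K / real d * C"
      by (rule mult_left_mono[OF mom]) (use K2 d0 in simp)
    moreover have "K / real d * C = K * C / real d" by simp
    moreover have "2 * K * C / real d = 2 * (K * C / real d)" by simp
    ultimately show ?thesis using split mS compl big by linarith
  qed
  ultimately show ?thesis unfolding perc_def hN K_def C_def I4_def \<nu>_def by simp
qed

theorem proposition3p4:
  fixes c :: real and V :: "nat \<Rightarrow> nat set" and E :: "nat \<Rightarrow> nat set set"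
  assumes "c > 0"
    and "\<And>d. simple_graph (V d) (E d) \<and> regular (V d) (E d) d"
  shows "\<forall>r::nat. \<forall>\<^sub>F d in sequentially. \<forall>u\<in>V d.
     dTV (map_pmf (\<lambda>F. rclass (ball (V d) F u r)) (percolation (E d) (c / real d)))
         (map_pmf rclass (GW_trunc c r))
       \<le> ln (real d) ^ r * real d powr (-1/2)"
proof
  fix r :: nat
  define B where "B = 2 * (2 + 2 * c + 2 * c ^ 2) * enn2real (\<integral>\<^sup>+W. ennreal (4 ^ card W) \<partial>measure_pmf (gw_words c r))"
  have B0: "B \<ge> 0" unfolding B_def using assms(1) by (simp add: add_nonneg_nonneg)
  define N where "N = max 3 (max (nat \<lceil>2 * c\<rceil>) (nat \<lceil>B ^ 2\<rceil>))"
  show "\<forall>\<^sub>F d in sequentially. \<forall>u\<in>V d.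
     dTV (map_pmf (\<lambda>F. rclass (ball (V d) F u r)) (percolation (E d) (c / real d)))
         (map_pmf rclass (GW_trunc c r))
       \<le> ln (real d) ^ r * real d powr (-1/2)"
  proof (rule eventually_mono[OF eventually_ge_at_top[of N]])
    fix d assume dN: "N \<le> d"
    have d3: "real d \<ge> 3" using dN unfolding N_def by linarith
    have dc: "2 * c \<le> real d"
    proof -
      have "nat \<lceil>2 * c\<rceil> \<le> d" using dN unfolding N_def by linarith
      then show ?thesis by linarith
    qed
    have dB: "B ^ 2 \<le> real d"
    proof -
      have "nat \<lceil>B ^ 2\<rceil> \<le> d" using dN unfolding N_def by linarith
      then show ?thesis by linarith
    qed
    have d0: "real d > 0" using d3 by linarith
    have sq: "sqrt (real d) > 0" using d0 by simp
    have Bs: "B \<le> sqrt (real d)" using dB B0 by (metis real_le_rsqrt)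
    have bound1: "B / real d \<le> 1 / sqrt (real d)"
    proof -
      have "real d = sqrt (real d) * sqrt (real d)" using d0 by simp
      then have e: "B / real d = (B / sqrt (real d)) / sqrt (real d)" by (metis divide_divide_eq_left)
      have "B / sqrt (real d) \<le> 1" using Bs sq by simp
      then have f: "(B / sqrt (real d)) / sqrt (real d) \<le> 1 / sqrt (real d)" by (rule divide_right_mono) (use sq in simp)
      show ?thesis unfolding e by (rule f)
    qed
    have ln1: "ln (real d) \<ge> 1"
    proof -
      have "exp 1 \<le> real d" using exp_le d3 by linarith
      then have "ln (exp 1) \<le> ln (real d)" using d0 by (subst ln_le_cancel_iff) auto
      then show ?thesis by simp
    qed
    have lnr: "ln (real d) ^ r \<ge> 1" using ln1 by (rule one_le_power)
    have pw: "real d powr (-1/2) = 1 / sqrt (real d)"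
      using d0 by (simp add: powr_minus_divide powr_half_sqrt)
    show "\<forall>u\<in>V d. dTV (map_pmf (\<lambda>F. rclass (ball (V d) F u r)) (percolation (E d) (c / real d)))
         (map_pmf rclass (GW_trunc c r)) \<le> ln (real d) ^ r * real d powr (-1/2)"
    proof
      fix u assume u: "u \<in> V d"
      have sg: "simple_graph (V d) (E d)" and reg: "regular (V d) (E d) d" using assms(2)[of d] by auto
      have "dTV (map_pmf (\<lambda>F. rclass (ball (V d) F u r)) (percolation (E d) (c / real d)))
         (map_pmf rclass (GW_trunc c r)) \<le> B / real d"
        unfolding B_def by (rule main_bound[OF assms(1) sg reg u dc])
      also have "\<dots> \<le> 1 / sqrt (real d)" by (rule bound1)
      also have "\<dots> \<le> ln (real d) ^ r * (1 / sqrt (real d))"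
      proof -
        have "1 * (1 / sqrt (real d)) \<le> ln (real d) ^ r * (1 / sqrt (real d))"
          by (rule mult_right_mono[OF lnr]) (use sq in simp)
        then show ?thesis by (simp only: mult_1)
      qed
      finally show "dTV (map_pmf (\<lambda>F. rclass (ball (V d) F u r)) (percolation (E d) (c / real d)))
         (map_pmf rclass (GW_trunc c r)) \<le> ln (real d) ^ r * real d powr (-1/2)" unfolding pw .
    qed
  qed
qed


end
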